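(* The bialgebra $(\mathcal{C}omp,\uplus,\Delta)$ is made a double bialgebra with the coproduct given by the following: if $(A_1,\ldots,A_k)\in \mathbf{Comp}[A]$, \begin{align*} \delta_A(A_1,\ldots,A_k)&=\sum_{(\sigma,\tau)\in \mathbf{cont}_k} \sigma \rightarrow (A_1,\ldots,A_k)\otimes \tau\rightarrow (A_1,\ldots,A_k)\\ &=\sum_{1\leq i_1<\ldots<i_p<k}(A_1\sqcup\ldots \sqcup A_{i_1},\ldots,A_{i_p+1}\sqcup\ldots \sqcup A_k)\otimes (A_1,\ldots, A_{i_1})\uplus \ldots\uplus (A_{i_p+1},\ldots, A_k). \end{align*} The counit is given by $\varepsilon'(A_1,\ldots, A_k)=\delta_{k,1}$.
   Context: $\mathcal{C}omp[A]$ is the vector space with basis the set compositions $(A_1,\ldots,A_k)$ of the finite set $A$; it is a twisted bialgebra with the quasi-shuffle product $\uplus$, $(A_1,\ldots,A_k)\uplus(A_{k+1},\ldots,A_{k+l})=\sum_{\sigma\in QSh(k,l)}\sigma\rightarrow(A_1,\ldots,A_{k+l})$, where $QSh(k,l)$ is the set of surjections $\sigma:\{1,\ldots,k+l\}\to\{1,\ldots,\max\sigma\}$ nondecreasing on $\{1,\ldots,k\}$ and on $\{k+1,\ldots,k+l\}$, and for a surjection $\sigma:\{1,\ldots,k\}\to\{1,\ldots,\max\sigma\}$, $\sigma\rightarrow(A_1,\ldots,A_k)=\big(\bigcup_{\sigma(i)=1}A_i,\ldots,\bigcup_{\sigma(i)=\max\sigma}A_i\big)$; the coproduct $\Delta$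 is deconcatenation: $\Delta_{A,B}(A_1,\ldots,A_k)=(A_1,\ldots,A_p)\otimes(A_{p+1},\ldots,A_k)$ if $A_1\sqcup\cdots\sqcup A_p=A$, $0$ otherwise. $\mathbf{cont}_k$ is the set of pairs $(\sigma,\tau)$ with $\sigma:\{1,\ldots,k\}\to\{1,\ldots,\max\sigma\}$ a nondecreasing surjection, $\tau:\{1,\ldots,k\}\to\{1,\ldots,\max\tau\}$ a surjection, such that $i<j$ and $\sigma(i)=\sigma(j)$ imply $\tau(i)<\tau(j)$. A double twisted bialgebra is a twisted bialgebra $(\mathcal{P},m,\Delta)$ with a second coproduct $\delta_A:\mathcal{P}[A]\to\mathcal{P}[A]\otimes\mathcal{P}[A]$ for each $A$, natural, coassociative, counital, multiplicative, and such that $(\Delta_{A,B}\otimes Id)\circ\delta_{A\sqcup B}=m_{1,3,24}\circ(\delta_A\otimes\delta_B)\circ\Delta_{A,B}$ (with $m_{1,3,24}(x\otimes y\otimes z\otimes t)=x\otimes z\otimes m_{A,B}(y\otimes t)$) and $\varepsilon$ is compatible with $\delta$. *)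

theory Defs
  imports Main
begin

text \<open>The space Comp[A] (coefficients in a field 'k) is
  represented by coefficient functions on lists of sets that vanish outside Comp A;
  tensor products Comp[A] (x) Comp[B] by coefficient functions on pairs, and so on.\<close>

definition is_comp :: "'a set \<Rightarrow> 'a set list \<Rightarrow> bool" where
  "is_comp A c \<longleftrightarrow> (\<forall>X\<in>set c. X \<noteq> {}) \<and>
     (\<forall>i j. i < j \<and> j < length c \<longrightarrow> c ! i \<inter> c ! j = {}) \<and> \<Union>(set c) = A"

definition Comp :: "'a set \<Rightarrow> 'a set list set" where
  "Comp A = {c. is_comp A c}"

definition vec :: "'a set \<Rightarrow> ('a set list \<Rightarrow> 'k::zero) \<Rightarrow> bool" where
  "vec A x \<longleftrightarrow> (\<forall>c. c \<notin> Comp A \<longrightarrow> x c = 0)"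

definition basis :: "'a set list \<Rightarrow> 'a set list \<Rightarrow> 'k::zero_neq_one" where
  "basis c = (\<lambda>z. if z = c then 1 else 0)"

definition unit :: "'a set list \<Rightarrow> 'k::zero_neq_one" where
  "unit = basis []"

text \<open>Surjections sigma : {1..k} -> {1..max sigma} are encoded 0-based as lists s of
  length k with set s = {0..<m}; then m = card (set s) plays the role of max sigma.\<close>
definition is_surj :: "nat list \<Rightarrow> bool" where
  "is_surj s \<longleftrightarrow> set s = {..<card (set s)}"

definition act :: "nat list \<Rightarrow> 'a set list \<Rightarrow> 'a set list" where
  "act s c = map (\<lambda>j. \<Union>{c ! i | i. i < length s \<and> s ! i = j}) [0..<card (set s)]"

definition QSh :: "nat \<Rightarrow> nat \<Rightarrow> nat list set" where
  "QSh k l = {s. length s = k + l \<and> is_surj s \<and>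
      sorted_wrt (<) (take k s) \<and> sorted_wrt (<) (drop k s)}"

definition cont :: "nat \<Rightarrow> (nat list \<times> nat list) set" where
  "cont k = {(s, t). length s = k \<and> length t = k \<and> is_surj s \<and> sorted s \<and> is_surj t \<and>
      (\<forall>i j. i < j \<and> j < k \<and> s ! i = s ! j \<longrightarrow> t ! i < t ! j)}"

definition qsh :: "'a set list \<Rightarrow> 'a set list \<Rightarrow> 'a set list \<Rightarrow> 'k::comm_ring_1" where
  "qsh c d = (\<lambda>z. \<Sum>s\<in>QSh (length c) (length d). if act s (c @ d) = z then 1 else 0)"

definition mult :: "'a set \<Rightarrow> 'a set \<Rightarrow> ('a set list \<Rightarrow> 'k::comm_ring_1)
    \<Rightarrow> ('a set list \<Rightarrow> 'k) \<Rightarrow> 'a set list \<Rightarrow> 'k" where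
  "mult A B x y = (\<lambda>z. \<Sum>(c, d)\<in>Comp A \<times> Comp B. x c * y d * qsh c d z)"

text \<open>Product in Comp[A] (x) Comp[A] times Comp[B] (x) Comp[B] to
  Comp[A u B] (x) Comp[A u B], i.e. (m (x) m) o (23).\<close>
definition mult2 :: "'a set \<Rightarrow> 'a set \<Rightarrow> ('a set list \<times> 'a set list \<Rightarrow> 'k::comm_ring_1)
    \<Rightarrow> ('a set list \<times> 'a set list \<Rightarrow> 'k) \<Rightarrow> 'a set list \<times> 'a set list \<Rightarrow> 'k" where
  "mult2 A B S T = (\<lambda>(u, v). \<Sum>(a, b)\<in>Comp A \<times> Comp A. \<Sum>(c, d)\<in>Comp B \<times> Comp B.
      S (a, b) * T (c, d) * qsh a c u * qsh b d v)"

fun qshs :: "'a set list list \<Rightarrow> 'a set list \<Rightarrow> 'k::comm_ring_1" where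
  "qshs [] = unit"
| "qshs (b # bs) = mult (\<Union>(set b)) (\<Union>(\<Union>(set ` set bs))) (basis b) (qshs bs)"

definition dec :: "'a set \<Rightarrow> 'a set list \<Rightarrow> 'a set list \<times> 'a set list \<Rightarrow> 'k::zero_neq_one" where
  "dec A c = (\<lambda>(u, v). if c = u @ v \<and> \<Union>(set u) = A then 1 else 0)"

definition Delta :: "'a set \<Rightarrow> 'a set \<Rightarrow> ('a set list \<Rightarrow> 'k::comm_ring_1)
    \<Rightarrow> 'a set list \<times> 'a set list \<Rightarrow> 'k" where
  "Delta A B x = (\<lambda>(u, v). \<Sum>c\<in>Comp (A \<union> B). x c * dec A c (u, v))"

definition dlt :: "'a set list \<Rightarrow> 'a set list \<times> 'a set list \<Rightarrow> 'k::comm_ring_1" where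
  "dlt c = (\<lambda>(u, v). \<Sum>(s, t)\<in>cont (length c). if act s c = u \<and> act t c = v then 1 else 0)"

definition delta :: "'a set \<Rightarrow> ('a set list \<Rightarrow> 'k::comm_ring_1) \<Rightarrow> 'a set list \<times> 'a set list \<Rightarrow> 'k" where
  "delta A x = (\<lambda>(u, v). \<Sum>c\<in>Comp A. x c * dlt c (u, v))"

text \<open>Counit epsilon' (with epsilon'(()) = 1 on the unit of Comp[{}]).\<close>
definition eps' :: "'a set list \<Rightarrow> 'k::comm_ring_1" where
  "eps' c = (if length c \<le> 1 then 1 else 0)"

definition epsp :: "'a set \<Rightarrow> ('a set list \<Rightarrow> 'k::comm_ring_1) \<Rightarrow> 'k" where
  "epsp A x = (\<Sum>c\<in>Comp A. x c * eps' c)"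

definition epsD :: "('a set list \<Rightarrow> 'k::comm_ring_1) \<Rightarrow> 'k" where
  "epsD x = x []"

definition delta_id :: "'a set \<Rightarrow> ('a set list \<times> 'a set list \<Rightarrow> 'k::comm_ring_1)
    \<Rightarrow> 'a set list \<times> 'a set list \<times> 'a set list \<Rightarrow> 'k" where
  "delta_id A T = (\<lambda>(u, v, w). \<Sum>(a, b)\<in>Comp A \<times> Comp A.
      T (a, b) * dlt a (u, v) * (if b = w then 1 else 0))"

definition id_delta :: "'a set \<Rightarrow> ('a set list \<times> 'a set list \<Rightarrow> 'k::comm_ring_1)
    \<Rightarrow> 'a set list \<times> 'a set list \<times> 'a set list \<Rightarrow> 'k" where
  "id_delta A T = (\<lambda>(u, v, w). \<Sum>(a, b)\<in>Comp A \<times> Comp A.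
      T (a, b) * (if a = u then 1 else 0) * dlt b (v, w))"

definition eps_id :: "'a set \<Rightarrow> ('a set list \<times> 'a set list \<Rightarrow> 'k::comm_ring_1)
    \<Rightarrow> 'a set list \<Rightarrow> 'k" where
  "eps_id A T = (\<lambda>w. \<Sum>(a, b)\<in>Comp A \<times> Comp A. T (a, b) * eps' a * (if b = w then 1 else 0))"

definition id_eps :: "'a set \<Rightarrow> ('a set list \<times> 'a set list \<Rightarrow> 'k::comm_ring_1)
    \<Rightarrow> 'a set list \<Rightarrow> 'k" where
  "id_eps A T = (\<lambda>w. \<Sum>(a, b)\<in>Comp A \<times> Comp A. T (a, b) * (if a = w then 1 else 0) * eps' b)"

definition epsD_id :: "('a set list \<times> 'a set list \<Rightarrow> 'k::comm_ring_1) \<Rightarrow> 'a set list \<Rightarrow> 'k" where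
  "epsD_id T = (\<lambda>w. \<Sum>(a, b)\<in>Comp {} \<times> Comp {}. T (a, b) * epsD (basis a) * (if b = w then 1 else 0))"

definition Delta_id :: "'a set \<Rightarrow> 'a set \<Rightarrow> ('a set list \<times> 'a set list \<Rightarrow> 'k::comm_ring_1)
    \<Rightarrow> 'a set list \<times> 'a set list \<times> 'a set list \<Rightarrow> 'k" where
  "Delta_id A B T = (\<lambda>(u, v, w). \<Sum>(a, b)\<in>Comp (A \<union> B) \<times> Comp (A \<union> B).
      T (a, b) * dec A a (u, v) * (if b = w then 1 else 0))"

text \<open>m_{1,3,24} o (delta_A (x) delta_B) on Comp[A] (x) Comp[B].\<close>
definition m1324_dd :: "'a set \<Rightarrow> 'a set \<Rightarrow> ('a set list \<times> 'a set list \<Rightarrow> 'k::comm_ring_1)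
    \<Rightarrow> 'a set list \<times> 'a set list \<times> 'a set list \<Rightarrow> 'k" where
  "m1324_dd A B S = (\<lambda>(u, v, w). \<Sum>(a, b)\<in>Comp A \<times> Comp B. \<Sum>(q, r)\<in>Comp A \<times> Comp B.
      S (a, b) * dlt a (u, q) * dlt b (v, r) * qsh q r w)"

definition relab :: "'a set \<Rightarrow> ('a \<Rightarrow> 'a) \<Rightarrow> ('a set list \<Rightarrow> 'k::comm_ring_1) \<Rightarrow> 'a set list \<Rightarrow> 'k" where
  "relab A f x = (\<lambda>z. \<Sum>c\<in>Comp A. x c * (if map ((`) f) c = z then 1 else 0))"

definition relab2 :: "'a set \<Rightarrow> ('a \<Rightarrow> 'a) \<Rightarrow> ('a set list \<times> 'a set list \<Rightarrow> 'k::comm_ring_1)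
    \<Rightarrow> 'a set list \<times> 'a set list \<Rightarrow> 'k" where
  "relab2 A f T = (\<lambda>(u, v). \<Sum>(a, b)\<in>Comp A \<times> Comp A.
      T (a, b) * (if map ((`) f) a = u then 1 else 0) * (if map ((`) f) b = v then 1 else 0))"

text \<open>Ways to cut a composition into consecutive nonempty pieces
  (equivalently, choices of 1 <= i_1 < ... < i_p < k).\<close>
definition splits :: "'a set list \<Rightarrow> 'a set list list set" where
  "splits c = {cs. concat cs = c \<and> (\<forall>b\<in>set cs. b \<noteq> [])}"

end

theory Submission
  imports Defs "HOL-Library.Product_Lexorder"
begin


fun pos :: "'a set list \<Rightarrow> 'a \<Rightarrow> nat" where
  "pos [] x = 0"
| "pos (X # c) x = (if x \<in> X then 0 else Suc (pos c x))"

fun cc :: "'a set list \<Rightarrow> bool" where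
  "cc [] = True"
| "cc (X # c) = (X \<noteq> {} \<and> X \<inter> \<Union>(set c) = {} \<and> cc c)"

lemma disj_Cons:
  "(\<forall>i j. i < j \<and> j < length (X # c) \<longrightarrow> (X # c) ! i \<inter> (X # c) ! j = {}) \<longleftrightarrow>
   (X \<inter> \<Union>(set c) = {} \<and> (\<forall>i j. i < j \<and> j < length c \<longrightarrow> c ! i \<inter> c ! j = {}))"
proof safe
  fix x Y assume h: "\<forall>i j. i < j \<and> j < length (X # c) \<longrightarrow> (X # c) ! i \<inter> (X # c) ! j = {}"
    and "x \<in> X" "x \<in> Y" "Y \<in> set c"
  then obtain k where k: "k < length c" "c ! k = Y" by (auto simp: in_set_conv_nth)
  from h[rule_format, of 0 "Suc k"] k \<open>x \<in> X\<close> \<open>x \<in> Y\<close> show "x \<in> {}" by auto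
next
  fix i j x assume h: "\<forall>i j. i < j \<and> j < length (X # c) \<longrightarrow> (X # c) ! i \<inter> (X # c) ! j = {}"
    and "i < j" "j < length c" "x \<in> c ! i" "x \<in> c ! j"
  from h[rule_format, of "Suc i" "Suc j"] this show "x \<in> {}" by auto
next
  fix i j x assume h1: "X \<inter> \<Union>(set c) = {}" and h2: "\<forall>i j. i < j \<and> j < length c \<longrightarrow> c ! i \<inter> c ! j = {}"
    and "i < j" "j < length (X # c)" "x \<in> (X # c) ! i" "x \<in> (X # c) ! j"
  then show "x \<in> {}"
  proof (cases i)
    case 0
    with \<open>i < j\<close> obtain j' where "j = Suc j'" by (cases j) auto
    with 0 h1 \<open>j < length (X # c)\<close> \<open>x \<in> (X # c) ! i\<close> \<open>x \<in> (X # c) ! j\<close> show ?thesis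
      by (auto simp: set_conv_nth)
  next
    case (Suc i')
    with \<open>i < j\<close> obtain j' where "j = Suc j'" by (cases j) auto
    with Suc h2 \<open>i < j\<close> \<open>j < length (X # c)\<close> \<open>x \<in> (X # c) ! i\<close> \<open>x \<in> (X # c) ! j\<close> show ?thesis
      by auto
  qed
qed

lemma cc_iff: "cc c \<longleftrightarrow> (\<forall>X\<in>set c. X \<noteq> {}) \<and>
     (\<forall>i j. i < j \<and> j < length c \<longrightarrow> c ! i \<inter> c ! j = {})"
proof (induction c)
  case Nil then show ?case by simp
next
  case (Cons X c)
  show ?case unfolding disj_Cons using Cons by auto
qed

lemma Comp_iff: "c \<in> Comp A \<longleftrightarrow> cc c \<and> \<Union>(set c) = A"
  by (simp add: Comp_def is_comp_def cc_iff)

lemma cc_append: "cc (c @ d) \<longleftrightarrow> cc c \<and> cc d \<and> \<Union>(set c) \<inter> \<Union>(set d) = {}"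
  by (induction c) auto

lemma pos_append: "pos (c @ d) x = (if x \<in> \<Union>(set c) then pos c x else length c + pos d x)"
  by (induction c) auto

lemma pos_lt: "x \<in> \<Union>(set c) \<Longrightarrow> pos c x < length c \<and> x \<in> c ! pos c x"
  by (induction c) auto

lemma pos_unique: "cc c \<Longrightarrow> i < length c \<Longrightarrow> x \<in> c ! i \<Longrightarrow> pos c x = i"
proof (induction c arbitrary: i)
  case Nil then show ?case by simp
next
  case (Cons X c)
  show ?case
  proof (cases i)
    case 0 then show ?thesis using Cons by simp
  next
    case (Suc i')
    then have "x \<in> c ! i'" "i' < length c" using Cons by auto
    then have "x \<in> \<Union>(set c)" by auto
    then have "x \<notin> X" using Cons by auto
    then show ?thesis using Cons Suc \<open>x \<in> c ! i'\<close> \<open>i' < length c\<close> by simp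
  qed
qed

lemma pos_image: "cc c \<Longrightarrow> pos c ` \<Union>(set c) = {..<length c}"
proof
  show "pos c ` \<Union>(set c) \<subseteq> {..<length c}" using pos_lt by fastforce
next
  assume "cc c"
  show "{..<length c} \<subseteq> pos c ` \<Union>(set c)"
  proof
    fix i assume "i \<in> {..<length c}"
    then have i: "i < length c" by simp
    then have "c ! i \<noteq> {}" using \<open>cc c\<close> by (auto simp: cc_iff)
    then obtain x where "x \<in> c ! i" by auto
    then have "pos c x = i" "x \<in> \<Union>(set c)" using pos_unique[OF \<open>cc c\<close> i] i by auto
    then show "i \<in> pos c ` \<Union>(set c)" by force
  qed
qed

lemma comp_eqI:
  assumes "c \<in> Comp A" "c' \<in> Comp A" "\<And>x. x \<in> A \<Longrightarrow> pos c x = pos c' x"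
  shows "c = c'"
proof -
  have cc: "cc c" "cc c'" and U: "\<Union>(set c) = A" "\<Union>(set c') = A" using assms by (auto simp: Comp_iff)
  have "{..<length c} = {..<length c'}"
    using pos_image[OF cc(1)] pos_image[OF cc(2)] U assms(3) by (metis image_cong)
  then have L: "length c = length c'" by simp
  have N: "c ! i = {x \<in> A. pos c x = i}" if "cc c" "\<Union>(set c) = A" "i < length c" for c :: "'a set list" and i
  proof
    show "c ! i \<subseteq> {x \<in> A. pos c x = i}" using that pos_unique[OF that(1) that(3)] by auto
    show "{x \<in> A. pos c x = i} \<subseteq> c ! i" using that pos_lt by fastforce
  qed
  show ?thesis
  proof (rule nth_equalityI)
    show "length c = length c'" by fact
    fix i assume "i < length c"
    then show "c ! i = c' ! i" using N[OF cc(1) U(1)] N[OF cc(2) U(2)] L assms(3) by auto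
  qed
qed

definition oeq :: "'a set \<Rightarrow> ('a \<Rightarrow> 'b::ord) \<Rightarrow> ('a \<Rightarrow> 'c::ord) \<Rightarrow> bool" where
  "oeq A f g \<longleftrightarrow> (\<forall>x\<in>A. \<forall>y\<in>A. f x < f y \<longleftrightarrow> g x < g y)"

lemma oeq_sym: "oeq A f g \<Longrightarrow> oeq A g f" by (auto simp: oeq_def)
lemma oeq_trans: "oeq A f g \<Longrightarrow> oeq A g h \<Longrightarrow> oeq A f h" by (auto simp: oeq_def)
lemma oeq_subset: "oeq A f g \<Longrightarrow> B \<subseteq> A \<Longrightarrow> oeq B f g" by (auto simp: oeq_def)
lemma oeq_eq: "oeq A (f::_\<Rightarrow>'b::linorder) (g::_\<Rightarrow>'c::linorder) \<Longrightarrow> x \<in> A \<Longrightarrow> y \<in> A \<Longrightarrow> f x = f y \<longleftrightarrow> g x = g y"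
  unfolding oeq_def by (metis linorder_neq_iff)
lemma oeq_le: "oeq A (f::_\<Rightarrow>'b::linorder) (g::_\<Rightarrow>'c::linorder) \<Longrightarrow> x \<in> A \<Longrightarrow> y \<in> A \<Longrightarrow> f x \<le> f y \<longleftrightarrow> g x \<le> g y"
  unfolding oeq_def by (metis not_le)

lemma oeq_pair:
  fixes f :: "_ \<Rightarrow> 'b::linorder" and f' :: "_ \<Rightarrow> 'c::linorder"
    and g :: "_ \<Rightarrow> 'd::linorder" and g' :: "_ \<Rightarrow> 'e::linorder"
  assumes "oeq A f f'" "oeq A g g'"
  shows "oeq A (\<lambda>x. (f x, g x)) (\<lambda>x. (f' x, g' x))"
  unfolding oeq_def
proof (intro ballI)
  fix x y assume xy: "x \<in> A" "y \<in> A"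
  have 1: "f x < f y \<longleftrightarrow> f' x < f' y" "g x < g y \<longleftrightarrow> g' x < g' y"
    using assms xy unfolding oeq_def by auto
  have 2: "f x = f y \<longleftrightarrow> f' x = f' y" using oeq_eq[OF assms(1) xy] .
  have 3: "(a, b) < (c, d) \<longleftrightarrow> a < c \<or> a = c \<and> b < d" for a c :: "'z::linorder" and b d :: "'w::linorder"
    by (auto simp: less_prod_def)
  show "((f x, g x) < (f y, g y)) = ((f' x, g' x) < (f' y, g' y))"
    unfolding 3 using 1 2 by blast
qed

lemma oeq_pos_eq:
  assumes "c \<in> Comp A" "c' \<in> Comp A" "oeq A (pos c) (pos c')"
  shows "c = c'"
proof -
  have cc: "cc c" "cc c'" and U: "\<Union>(set c) = A" "\<Union>(set c') = A" using assms by (auto simp: Comp_iff)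
  have "\<forall>x\<in>A. pos c x = n \<longrightarrow> pos c x = pos c' x" for n
  proof (induction n rule: less_induct)
    case (less n)
    show ?case
    proof (intro ballI impI)
      fix x assume x: "x \<in> A" "pos c x = n"
      let ?S = "{y \<in> A. pos c y < pos c x}"
      have 1: "pos c ` ?S = {..<pos c x}"
      proof
        show "pos c ` ?S \<subseteq> {..<pos c x}" by auto
        show "{..<pos c x} \<subseteq> pos c ` ?S"
        proof
          fix i assume "i \<in> {..<pos c x}"
          moreover have "pos c x < length c" using pos_lt[of x c] x(1) U(1) by simp
          ultimately have "i \<in> pos c ` A" using pos_image[OF cc(1)] U(1) by simp
          then obtain y where "y \<in> A" "i = pos c y" by blast
          then show "i \<in> pos c ` ?S" using \<open>i \<in> {..<pos c x}\<close> by blast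
        qed
      qed
      have S: "?S = {y \<in> A. pos c' y < pos c' x}" using assms(3) x unfolding oeq_def by blast
      have 2: "pos c' ` ?S = {..<pos c' x}"
      proof
        show "pos c' ` ?S \<subseteq> {..<pos c' x}" using S by auto
        show "{..<pos c' x} \<subseteq> pos c' ` ?S"
        proof
          fix i assume "i \<in> {..<pos c' x}"
          moreover have "pos c' x < length c'" using pos_lt[of x c'] x(1) U(2) by simp
          ultimately have "i \<in> pos c' ` A" using pos_image[OF cc(2)] U(2) by simp
          then obtain y where "y \<in> A" "i = pos c' y" by blast
          then show "i \<in> pos c' ` ?S" using \<open>i \<in> {..<pos c' x}\<close> S by blast
        qed
      qed
      have "pos c y = pos c' y" if "y \<in> ?S" for y
        using less[rule_format, of "pos c y" y] that x by simp
      then have "pos c ` ?S = pos c' ` ?S" by (intro image_cong) auto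
      with 1 2 have "{..<pos c x} = {..<pos c' x}" by simp
      then show "pos c x = pos c' x" by (metis card_lessThan)
    qed
  qed
  then show ?thesis using comp_eqI[OF assms(1,2)] by simp
qed

lemma oeq_comp_eq:
  fixes F :: "_ \<Rightarrow> 'b::linorder"
  assumes "c \<in> Comp A" "c' \<in> Comp A" "oeq A (pos c) F" "oeq A (pos c') F"
  shows "c = c'"
  using oeq_pos_eq[OF assms(1,2)] oeq_trans[OF assms(3) oeq_sym[OF assms(4)]] by blast

lemma finite_Comp: "finite A \<Longrightarrow> finite (Comp A)"
proof -
  assume "finite A"
  have "Comp A \<subseteq> {xs. set xs \<subseteq> Pow A \<and> length xs \<le> card A}"
  proof
    fix c assume c: "c \<in> Comp A"
    then have "cc c" "\<Union>(set c) = A" by (auto simp: Comp_iff)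
    then have "length c = card (pos c ` A)" using pos_image by fastforce
    also have "\<dots> \<le> card A" using \<open>finite A\<close> card_image_le by blast
    finally show "c \<in> {xs. set xs \<subseteq> Pow A \<and> length xs \<le> card A}" using \<open>\<Union>(set c) = A\<close> by auto
  qed
  moreover have "finite {xs. set xs \<subseteq> Pow A \<and> length xs \<le> card A}"
    using \<open>finite A\<close> by (intro finite_lists_length_le) auto
  ultimately show ?thesis by (rule finite_subset)
qed

lemma sum_unique:
  assumes "finite S" "\<And>p. p \<in> S \<Longrightarrow> p \<noteq> p0 \<Longrightarrow> g p = 0"
  shows "sum g S = (if p0 \<in> S then g p0 else 0)"
proof (cases "p0 \<in> S")
  case True
  then have "sum g S = g p0 + sum g (S - {p0})" using assms(1) by (simp add: sum.remove)
  also have "sum g (S - {p0}) = 0" using assms(2) by (intro sum.neutral) auto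
  finally show ?thesis using True by simp
next
  case False
  then show ?thesis using assms(2) by (auto intro: sum.neutral)
qed



definition res :: "'a set list \<Rightarrow> 'a set \<Rightarrow> 'a set list" where
  "res v X = filter (\<lambda>Y. Y \<noteq> {}) (map (\<lambda>Y. Y \<inter> X) v)"

lemma res_Nil[simp]: "res [] X = []" by (simp add: res_def)
lemma res_Cons: "res (Y # v) X = (if Y \<inter> X = {} then res v X else (Y \<inter> X) # res v X)"
  by (simp add: res_def)

lemma res_Union: "\<Union>(set (res v X)) = \<Union>(set v) \<inter> X"
  by (induction v) (auto simp: res_Cons)

lemma res_cc: "cc v \<Longrightarrow> cc (res v X)"
  by (induction v) (auto simp: res_Cons res_Union)

lemma res_Comp: "v \<in> Comp A \<Longrightarrow> X \<subseteq> A \<Longrightarrow> res v X \<in> Comp X"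
  unfolding Comp_iff using res_cc res_Union by (metis inf.absorb_iff2)

lemma res_res: "X \<subseteq> B \<Longrightarrow> res (res v B) X = res v X"
  by (induction v) (auto simp: res_Cons)

lemma res_id_cc: "cc v \<Longrightarrow> \<Union>(set v) \<subseteq> A \<Longrightarrow> res v A = v"
  by (induction v) (auto simp: res_Cons Int_absorb2)

lemma res_id: "v \<in> Comp A \<Longrightarrow> res v A = v"
  unfolding Comp_iff using res_id_cc by blast

lemma res_oeq: "cc v \<Longrightarrow> oeq (X \<inter> \<Union>(set v)) (pos (res v X)) (pos v)"
proof (induction v)
  case Nil then show ?case by (simp add: oeq_def)
next
  case (Cons Y v)
  then have IH: "oeq (X \<inter> \<Union>(set v)) (pos (res v X)) (pos v)" and d: "Y \<inter> \<Union>(set v) = {}" by auto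
  show ?case unfolding oeq_def
  proof (intro ballI)
    fix x y assume x: "x \<in> X \<inter> \<Union>(set (Y # v))" and y: "y \<in> X \<inter> \<Union>(set (Y # v))"
    show "(pos (res (Y # v) X) x < pos (res (Y # v) X) y) = (pos (Y # v) x < pos (Y # v) y)"
    proof (cases "Y \<inter> X = {}")
      case True
      then have "x \<in> X \<inter> \<Union>(set v)" "y \<in> X \<inter> \<Union>(set v)" "x \<notin> Y" "y \<notin> Y" using x y by auto
      then show ?thesis using IH True unfolding oeq_def by (simp add: res_Cons)
    next
      case False
      have r: "res (Y # v) X = (Y \<inter> X) # res v X" using False by (simp add: res_Cons)
      show ?thesis
      proof (cases "x \<in> Y"; cases "y \<in> Y")
        assume "x \<notin> Y" "y \<notin> Y"
        then have "x \<in> X \<inter> \<Union>(set v)" "y \<in> X \<inter> \<Union>(set v)" using x y by auto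
        then show ?thesis using IH \<open>x \<notin> Y\<close> \<open>y \<notin> Y\<close> unfolding oeq_def r by simp
      qed (use x y r in auto)
    qed
  qed
qed

lemma res_oeq': "v \<in> Comp A \<Longrightarrow> X \<subseteq> A \<Longrightarrow> oeq X (pos (res v X)) (pos v)"
  using res_oeq[of v X] unfolding Comp_iff by (metis inf.absorb_iff1)

definition meet :: "'a set list \<Rightarrow> 'a set list \<Rightarrow> 'a set list" where
  "meet u v = concat (map (res v) u)"

lemma meet_Nil[simp]: "meet [] v = []" by (simp add: meet_def)
lemma meet_Cons: "meet (X # u) v = res v X @ meet u v" by (simp add: meet_def)
lemma meet_append: "meet (u @ w) v = meet u v @ meet w v" by (simp add: meet_def)

lemma meet_cc: "cc u \<Longrightarrow> cc v \<Longrightarrow> \<Union>(set u) \<subseteq> \<Union>(set v) \<Longrightarrow> cc (meet u v) \<and> \<Union>(set (meet u v)) = \<Union>(set u)"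
proof (induction u)
  case Nil then show ?case by simp
next
  case (Cons X u)
  then have IH: "cc (meet u v) \<and> \<Union>(set (meet u v)) = \<Union>(set u)" by auto
  have rU: "\<Union>(set (res v X)) = X" using Cons.prems res_Union[of v X] by auto
  show ?case unfolding meet_Cons cc_append using IH rU res_cc[OF Cons.prems(2), of X] Cons.prems(1)
    by auto
qed

lemma meet_Comp: "u \<in> Comp A \<Longrightarrow> v \<in> Comp A \<Longrightarrow> meet u v \<in> Comp A"
  unfolding Comp_iff using meet_cc by (metis order_refl)

lemma lexless: "((a::'z::linorder), (b::'w::linorder)) < (c, d) \<longleftrightarrow> a < c \<or> a = c \<and> b < d"
  by (auto simp: less_prod_def)
lemma lexle: "((a::'z::linorder), (b::'w::linorder)) \<le> (c, d) \<longleftrightarrow> a < c \<or> a = c \<and> b \<le> d"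
  by (auto simp: less_eq_prod_def)

lemma meet_oeq: "cc u \<Longrightarrow> cc v \<Longrightarrow> \<Union>(set u) \<subseteq> \<Union>(set v) \<Longrightarrow>
  oeq (\<Union>(set u)) (pos (meet u v)) (\<lambda>x. (pos u x, pos v x))"
proof (induction u)
  case Nil then show ?case by (simp add: oeq_def)
next
  case (Cons X u)
  then have IH: "oeq (\<Union>(set u)) (pos (meet u v)) (\<lambda>x. (pos u x, pos v x))"
    and d: "X \<inter> \<Union>(set u) = {}" and sub: "X \<subseteq> \<Union>(set v)" by auto
  have rU: "\<Union>(set (res v X)) = X" using sub res_Union[of v X] by auto
  have RO: "oeq X (pos (res v X)) (pos v)" using res_oeq[OF Cons.prems(2), of X] sub
    by (metis inf.absorb_iff1)
  have P: "pos (meet (X # u) v) x = (if x \<in> X then pos (res v X) x else length (res v X) + pos (meet u v) x)" for x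
    unfolding meet_Cons pos_append rU ..
  have L: "x \<in> X \<Longrightarrow> pos (res v X) x < length (res v X)" for x using pos_lt[of x "res v X"] rU by simp
  show ?case unfolding oeq_def
  proof (intro ballI)
    fix x y assume x: "x \<in> \<Union>(set (X # u))" and y: "y \<in> \<Union>(set (X # u))"
    show "(pos (meet (X # u) v) x < pos (meet (X # u) v) y) =
          ((pos (X # u) x, pos v x) < (pos (X # u) y, pos v y))"
    proof (cases "x \<in> X"; cases "y \<in> X")
      assume "x \<in> X" "y \<in> X"
      then show "?thesis" using RO unfolding oeq_def by (simp add: P lexless)
    next
      assume "x \<in> X" "y \<notin> X"
      then show "?thesis" using L[of x] by (simp add: P lexless)
    next
      assume "x \<notin> X" "y \<in> X"
      then show "?thesis" using L[of y] by (simp add: P lexless)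
    next
      assume "x \<notin> X" "y \<notin> X"
      then have "x \<in> \<Union>(set u)" "y \<in> \<Union>(set u)" using x y by auto
      then have "(pos (meet u v) x < pos (meet u v) y) = ((pos u x, pos v x) < (pos u y, pos v y))"
        using IH unfolding oeq_def by blast
      then show "?thesis" using \<open>x \<notin> X\<close> \<open>y \<notin> X\<close> by (simp add: P lexless)
    qed
  qed
qed

lemma meet_oeq': "u \<in> Comp A \<Longrightarrow> v \<in> Comp A \<Longrightarrow> oeq A (pos (meet u v)) (\<lambda>x. (pos u x, pos v x))"
  unfolding Comp_iff using meet_oeq by (metis order_refl)



lemma Comp_cc: "c \<in> Comp A \<Longrightarrow> cc c" and Comp_U: "c \<in> Comp A \<Longrightarrow> \<Union>(set c) = A"
  by (auto simp: Comp_iff)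

lemma Comp_disj: "c \<in> Comp A \<Longrightarrow> i < length c \<Longrightarrow> j < length c \<Longrightarrow> i \<noteq> j \<Longrightarrow> c ! i \<inter> c ! j = {}"
proof -
  assume a: "c \<in> Comp A" "i < length c" "j < length c" "i \<noteq> j"
  have d: "\<forall>i j. i < j \<and> j < length c \<longrightarrow> c ! i \<inter> c ! j = {}" using a(1) by (simp add: Comp_def is_comp_def)
  show ?thesis
  proof (cases "i < j")
    case True then show ?thesis using d a by simp
  next
    case False then have "j < i" using a(4) by simp
    then have "c ! j \<inter> c ! i = {}" using d a(2) by blast
    then show ?thesis by (simp add: Int_commute)
  qed
qed

lemma Comp_ne: "c \<in> Comp A \<Longrightarrow> i < length c \<Longrightarrow> c ! i \<noteq> {}"
  unfolding Comp_def is_comp_def by auto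

lemma Comp_rep: "c \<in> Comp A \<Longrightarrow> i < length c \<Longrightarrow> \<exists>x\<in>A. pos c x = i"
proof -
  assume a: "c \<in> Comp A" "i < length c"
  have "pos c ` A = {..<length c}" using pos_image[OF Comp_cc[OF a(1)]] Comp_U[OF a(1)] by simp
  then have "i \<in> pos c ` A" using a(2) by simp
  then show ?thesis by blast
qed

lemma pos_in: "c \<in> Comp A \<Longrightarrow> x \<in> A \<Longrightarrow> pos c x < length c \<and> x \<in> c ! pos c x"
  using pos_lt[of x c] Comp_U[of c A] by simp

lemma pos_eqI: "c \<in> Comp A \<Longrightarrow> i < length c \<Longrightarrow> x \<in> c ! i \<Longrightarrow> pos c x = i"
proof -
  assume a: "c \<in> Comp A" "i < length c" "x \<in> c ! i"
  show ?thesis by (rule pos_unique[OF Comp_cc[OF a(1)] a(2) a(3)])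
qed

lemma nth_in_Comp: "c \<in> Comp A \<Longrightarrow> i < length c \<Longrightarrow> c ! i \<subseteq> A"
proof -
  assume a: "c \<in> Comp A" "i < length c"
  have "c ! i \<in> set c" using a(2) by simp
  then show ?thesis using Comp_U[OF a(1)] by auto
qed

lemma surj_set: "is_surj s \<Longrightarrow> set s = {..<card (set s)}"
  by (simp add: is_surj_def)

lemma surj_lt: "is_surj s \<Longrightarrow> i < length s \<Longrightarrow> s ! i < card (set s)"
proof -
  assume a: "is_surj s" "i < length s"
  have "s ! i \<in> set s" using a(2) by simp
  then have "s ! i \<in> {..<card (set s)}" using surj_set[OF a(1)] by (simp only:)
  then show ?thesis by simp
qed

lemma surj_le: "is_surj s \<Longrightarrow> card (set s) \<le> length s"
  by (rule card_length)

lemma act_length: "length (act s c) = card (set s)" by (simp add: act_def)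

lemma act_nth: "j < card (set s) \<Longrightarrow> act s c ! j = \<Union>{c ! i | i. i < length s \<and> s ! i = j}"
  by (simp add: act_def)

lemma act_sub:
  assumes "is_surj s" "i < length s"
  shows "c ! i \<subseteq> act s c ! (s ! i)"
proof -
  have "c ! i \<subseteq> \<Union>{c ! ia |ia. ia < length s \<and> s ! ia = s ! i}" using assms(2) by blast
  then show ?thesis using act_nth[OF surj_lt[OF assms], of c] by simp
qed

lemma act_Comp:
  assumes c: "c \<in> Comp A" and s: "is_surj s" "length s = length c"
  shows "act s c \<in> Comp A"
  unfolding Comp_def is_comp_def mem_Collect_eq
proof (intro conjI allI impI)
  show "\<forall>X\<in>set (act s c). X \<noteq> {}"
  proof
    fix X assume "X \<in> set (act s c)"
    then obtain j where j: "j < card (set s)" "X = act s c ! j" by (auto simp: in_set_conv_nth act_length)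
    then have "j \<in> set s" using surj_set[OF s(1)] by auto
    then obtain i where i: "i < length s" "s ! i = j" by (auto simp: in_set_conv_nth)
    then have "c ! i \<subseteq> X" using act_sub[OF s(1) i(1), of c] j by simp
    moreover have "c ! i \<noteq> {}" using Comp_ne[OF c] i s(2) by simp
    ultimately show "X \<noteq> {}" by blast
  qed
next
  fix j1 j2 assume j: "j1 < j2 \<and> j2 < length (act s c)"
  show "act s c ! j1 \<inter> act s c ! j2 = {}"
  proof (rule ccontr)
    assume "act s c ! j1 \<inter> act s c ! j2 \<noteq> {}"
    then obtain x where "x \<in> act s c ! j1" "x \<in> act s c ! j2" by blast
    moreover have "j1 < card (set s)" "j2 < card (set s)" using j by (auto simp: act_length)
    ultimately have "x \<in> \<Union>{c ! i | i. i < length s \<and> s ! i = j1}" "x \<in> \<Union>{c ! i | i. i < length s \<and> s ! i = j2}"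
      using act_nth[of _ s c] by simp_all
    then obtain i1 i2 where "i1 < length s" "s ! i1 = j1" "x \<in> c ! i1"
      "i2 < length s" "s ! i2 = j2" "x \<in> c ! i2"
      by blast
    moreover have "i1 \<noteq> i2" using j \<open>s ! i1 = j1\<close> \<open>s ! i2 = j2\<close> by auto
    ultimately show False using Comp_disj[OF c, of i1 i2] s(2) by auto
  qed
next
  have "\<Union>(set (act s c)) = \<Union>{c ! i | i. i < length s}"
  proof
    show "\<Union>(set (act s c)) \<subseteq> \<Union>{c ! i | i. i < length s}"
    proof
      fix x assume "x \<in> \<Union>(set (act s c))"
      then obtain j where "j < card (set s)" "x \<in> act s c ! j" by (auto simp: in_set_conv_nth act_length)
      then have "x \<in> \<Union>{c ! i | i. i < length s \<and> s ! i = j}" using act_nth[of j s c] by simp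
      then show "x \<in> \<Union>{c ! i | i. i < length s}" by blast
    qed
    show "\<Union>{c ! i | i. i < length s} \<subseteq> \<Union>(set (act s c))"
    proof
      fix x assume "x \<in> \<Union>{c ! i | i. i < length s}"
      then obtain i where i: "i < length s" "x \<in> c ! i" by blast
      then have "x \<in> act s c ! (s ! i)" using act_sub[OF s(1) i(1), of c] i(2) by blast
      moreover have "s ! i < length (act s c)" using surj_lt[OF s(1) i(1)] by (simp add: act_length)
      ultimately show "x \<in> \<Union>(set (act s c))" by (meson UnionI nth_mem)
    qed
  qed
  also have "\<Union>{c ! i | i. i < length s} = \<Union>(set c)"
  proof -
    have "{c ! i | i. i < length s} = set c" using s(2) by (auto simp: in_set_conv_nth)
    then show ?thesis by simp
  qed
  also have "\<dots> = A" using Comp_U[OF c] .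
  finally show "\<Union>(set (act s c)) = A" .
qed

lemma pos_act:
  assumes c: "c \<in> Comp A" and s: "is_surj s" "length s = length c" and x: "x \<in> A"
  shows "pos (act s c) x = s ! (pos c x)"
proof -
  have p: "pos c x < length c" "x \<in> c ! pos c x" using pos_in[OF c x] by auto
  have "x \<in> act s c ! (s ! pos c x)" using act_sub[OF s(1), of "pos c x" c] p s(2) by auto
  moreover have "s ! pos c x < length (act s c)" using surj_lt[OF s(1)] p s(2) by (simp add: act_length)
  ultimately show ?thesis using pos_eqI[OF act_Comp[OF c s]] by blast
qed

lemma act_inj:
  assumes c: "c \<in> Comp A" and s: "is_surj s" "length s = length c"
    and s': "is_surj s'" "length s' = length c" and eq: "act s c = act s' c"
  shows "s = s'"
proof (rule nth_equalityI)
  show "length s = length s'" using s s' by simp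
  fix i assume i: "i < length s"
  obtain x where x: "x \<in> A" "pos c x = i" using Comp_rep[OF c, of i] i s(2) by auto
  show "s ! i = s' ! i" using pos_act[OF c s x(1)] pos_act[OF c s' x(1)] eq x(2) by simp
qed

lemma act_exists:
  assumes c: "c \<in> Comp A" and u: "u \<in> Comp A"
    and cons: "\<And>x y. x \<in> A \<Longrightarrow> y \<in> A \<Longrightarrow> pos c x = pos c y \<Longrightarrow> pos u x = pos u y"
  shows "\<exists>s. length s = length c \<and> is_surj s \<and> act s c = u \<and> (\<forall>x\<in>A. s ! (pos c x) = pos u x)"
proof -
  define s where "s = map (\<lambda>i. pos u (SOME x. x \<in> c ! i)) [0..<length c]"
  have L: "length s = length c" by (simp add: s_def)
  have some: "(SOME y. y \<in> c ! i) \<in> c ! i" if "i < length c" for i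
    using Comp_ne[OF c that] by (simp add: some_in_eq)
  have sx: "s ! (pos c x) = pos u x" if x: "x \<in> A" for x
  proof -
    let ?i = "pos c x"
    have i: "?i < length c" using pos_in[OF c x] by simp
    let ?y = "SOME y. y \<in> c ! ?i"
    have y: "?y \<in> c ! ?i" using some[OF i] .
    have yA: "?y \<in> A" using y nth_in_Comp[OF c i] by blast
    have "pos c ?y = ?i" using pos_eqI[OF c i y] .
    then have "pos u ?y = pos u x" using cons[OF yA x] by simp
    then show ?thesis using i by (simp add: s_def)
  qed
  have "set s = pos u ` A"
  proof
    show "set s \<subseteq> pos u ` A"
    proof
      fix j assume "j \<in> set s"
      then obtain i where i: "i < length c" "j = pos u (SOME x. x \<in> c ! i)" by (auto simp: s_def)
      then show "j \<in> pos u ` A" using some[OF i(1)] nth_in_Comp[OF c i(1)] by blast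
    qed
    show "pos u ` A \<subseteq> set s"
    proof
      fix j assume "j \<in> pos u ` A"
      then obtain x where x: "x \<in> A" "j = pos u x" by blast
      then have "j = s ! (pos c x)" using sx by simp
      moreover have "pos c x < length s" using pos_in[OF c x(1)] L by simp
      ultimately show "j \<in> set s" by simp
    qed
  qed
  also have "\<dots> = {..<length u}" using pos_image[OF Comp_cc[OF u]] Comp_U[OF u] by simp
  finally have S: "set s = {..<length u}" .
  then have surj: "is_surj s" by (simp add: is_surj_def)
  have "act s c = u"
  proof (rule comp_eqI[OF act_Comp[OF c surj L] u])
    fix x assume "x \<in> A"
    then show "pos (act s c) x = pos u x" using pos_act[OF c surj L] sx by simp
  qed
  then show ?thesis using L surj sx by blast
qed



lemma sum_ind_unique:
  assumes "finite S" "\<And>p q. p \<in> S \<Longrightarrow> q \<in> S \<Longrightarrow> P p \<Longrightarrow> P q \<Longrightarrow> p = q"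
  shows "(\<Sum>p\<in>S. if P p then (1::'k::comm_ring_1) else 0) = (if \<exists>p\<in>S. P p then 1 else 0)"
proof (cases "\<exists>p\<in>S. P p")
  case True
  then obtain p0 where p0: "p0 \<in> S" "P p0" by blast
  have "(\<Sum>p\<in>S. if P p then (1::'k) else 0) = (if p0 \<in> S then (if P p0 then 1 else 0) else 0)"
    by (rule sum_unique[OF assms(1)]) (use assms(2) p0 in auto)
  then show ?thesis using p0 True by simp
next
  case False
  then show ?thesis by (auto intro: sum.neutral)
qed

lemma strict_iff:
  fixes f :: "nat \<Rightarrow> nat"
  assumes "\<And>i j. i < j \<Longrightarrow> j < n \<Longrightarrow> f i < f j" "i < n" "j < n"
  shows "i < j \<longleftrightarrow> f i < f j"
proof
  assume "i < j" then show "f i < f j" using assms by blast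
next
  assume a: "f i < f j"
  show "i < j"
  proof (rule ccontr)
    assume "\<not> i < j"
    then consider "i = j" | "j < i" by linarith
    then show False
    proof cases
      case 1 then show False using a by simp
    next
      case 2 then have "f j < f i" using assms by blast
      then show False using a by simp
    qed
  qed
qed

lemma finite_surjs: "finite {s. length s = k \<and> is_surj s}"
proof -
  have "{s. length s = k \<and> is_surj s} \<subseteq> {s. set s \<subseteq> {..<k} \<and> length s = k}"
  proof
    fix s assume "s \<in> {s. length s = k \<and> is_surj s}"
    then have "length s = k" "is_surj s" by auto
    have "s ! i < k" if "i < length s" for i using surj_lt[OF \<open>is_surj s\<close> that] surj_le[OF \<open>is_surj s\<close>] \<open>length s = k\<close> by linarith
    then have "set s \<subseteq> {..<k}" by (auto simp: in_set_conv_nth)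
    then show "s \<in> {s. set s \<subseteq> {..<k} \<and> length s = k}" using \<open>length s = k\<close> by simp
  qed
  moreover have "finite {s. set s \<subseteq> {..<k} \<and> length s = k}"
    by (rule finite_lists_length_eq) simp
  ultimately show ?thesis by (rule finite_subset)
qed

lemma finite_cont: "finite (cont k)"
proof -
  have "cont k \<subseteq> {s. length s = k \<and> is_surj s} \<times> {s. length s = k \<and> is_surj s}"
    by (auto simp: cont_def)
  moreover have "finite ({s. length s = k \<and> is_surj s} \<times> {s. length s = k \<and> is_surj s})"
    using finite_surjs by (rule finite_cartesian_product) (rule finite_surjs)
  ultimately show ?thesis by (rule finite_subset)
qed

lemma finite_QSh: "finite (QSh k l)"
proof -
  have "QSh k l \<subseteq> {s. length s = k + l \<and> is_surj s}" by (auto simp: QSh_def)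
  then show ?thesis using finite_surjs by (rule finite_subset)
qed

lemma cont_index2:
  assumes st: "(s, t) \<in> cont k" and ij: "i < k" "j < k"
  shows "i < j \<longleftrightarrow> (s ! i, t ! i) < (s ! j, t ! j)"
proof -
  have L: "length s = k" "length t = k" and so: "sorted s"
    and ct: "\<And>i j. i < j \<Longrightarrow> j < k \<Longrightarrow> s ! i = s ! j \<Longrightarrow> t ! i < t ! j"
    using st by (auto simp: cont_def)
  have fw: "(s ! i, t ! i) < (s ! j, t ! j)" if "i < j" "j < k" for i j
  proof -
    have "s ! i \<le> s ! j" using so that L by (simp add: sorted_iff_nth_mono)
    then show ?thesis using ct[OF that] unfolding lexless by auto
  qed
  show ?thesis
  proof
    assume "i < j" then show "(s ! i, t ! i) < (s ! j, t ! j)" using fw ij by simp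
  next
    assume a: "(s ! i, t ! i) < (s ! j, t ! j)"
    show "i < j"
    proof (rule ccontr)
      assume "\<not> i < j"
      then consider "i = j" | "j < i" by linarith
      then show False
      proof cases
        case 1 then show False using a by simp
      next
        case 2 then have "(s ! j, t ! j) < (s ! i, t ! i)" using fw ij by simp
        then show False using a unfolding lexless by auto
      qed
    qed
  qed
qed

lemma cont_meet:
  assumes c: "c \<in> Comp A" and st: "(s, t) \<in> cont (length c)"
  shows "c = meet (act s c) (act t c)"
proof -
  have s: "is_surj s" "length s = length c" and t: "is_surj t" "length t = length c"
    using st by (auto simp: cont_def)
  have u: "act s c \<in> Comp A" and v: "act t c \<in> Comp A" using act_Comp[OF c s] act_Comp[OF c t] by auto
  let ?F = "\<lambda>x. (pos (act s c) x, pos (act t c) x)"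
  have "oeq A (pos c) ?F" unfolding oeq_def
  proof (intro ballI)
    fix x y assume x: "x \<in> A" and y: "y \<in> A"
    have "pos c x < length c" "pos c y < length c" using pos_in[OF c x] pos_in[OF c y] by auto
    then show "(pos c x < pos c y) = (?F x < ?F y)"
      using cont_index2[OF st] pos_act[OF c s x] pos_act[OF c s y] pos_act[OF c t x] pos_act[OF c t y]
      by simp
  qed
  then show ?thesis using oeq_comp_eq[OF c meet_Comp[OF u v]] meet_oeq'[OF u v] by blast
qed

lemma cont_exists:
  assumes c: "c \<in> Comp A" and u: "u \<in> Comp A" and v: "v \<in> Comp A" and m: "c = meet u v"
  shows "\<exists>s t. (s, t) \<in> cont (length c) \<and> act s c = u \<and> act t c = v"
proof -
  let ?F = "\<lambda>x. (pos u x, pos v x)"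
  have O: "oeq A (pos c) ?F" using meet_oeq'[OF u v] m by simp
  have E: "?F x = ?F y" if "x \<in> A" "y \<in> A" "pos c x = pos c y" for x y
    using oeq_eq[OF O that(1,2)] that(3) by blast
  have Eu: "pos u x = pos u y" if "x \<in> A" "y \<in> A" "pos c x = pos c y" for x y
    using E[OF that] by simp
  have Ev: "pos v x = pos v y" if "x \<in> A" "y \<in> A" "pos c x = pos c y" for x y
    using E[OF that] by simp
  obtain s where s: "length s = length c" "is_surj s" "act s c = u" "\<forall>x\<in>A. s ! (pos c x) = pos u x"
    using act_exists[OF c u Eu] by blast
  obtain t where t: "length t = length c" "is_surj t" "act t c = v" "\<forall>x\<in>A. t ! (pos c x) = pos v x"
    using act_exists[OF c v Ev] by blast
  have "(s, t) \<in> cont (length c)" unfolding cont_def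
  proof (simp only: mem_Collect_eq case_prod_conv, intro conjI allI impI)
    show "length s = length c" "length t = length c" "is_surj s" "is_surj t" using s t by auto
    show "sorted s" unfolding sorted_iff_nth_mono
    proof (intro allI impI)
      fix i j assume ij: "i \<le> j" "j < length s"
      obtain x where x: "x \<in> A" "pos c x = i" using Comp_rep[OF c, of i] ij s(1) by auto
      obtain y where y: "y \<in> A" "pos c y = j" using Comp_rep[OF c, of j] ij s(1) by auto
      have "?F x \<le> ?F y" using oeq_le[OF O x(1) y(1)] x y ij by simp
      then have "pos u x \<le> pos u y" unfolding lexle by auto
      then show "s ! i \<le> s ! j" using s(4) x y by auto
    qed
    fix i j assume ij: "i < j \<and> j < length c \<and> s ! i = s ! j"
    obtain x where x: "x \<in> A" "pos c x = i" using Comp_rep[OF c, of i] ij by auto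
    obtain y where y: "y \<in> A" "pos c y = j" using Comp_rep[OF c, of j] ij by auto
    have "pos c x < pos c y \<longleftrightarrow> ?F x < ?F y" using O[unfolded oeq_def] x(1) y(1) by blast
    then have "?F x < ?F y" using x(2) y(2) ij by simp
    moreover have "pos u x = pos u y" using s(4) x y ij by auto
    ultimately have "pos v x < pos v y" unfolding lexless by auto
    then show "t ! i < t ! j" using t(4) x y by auto
  qed
  then show ?thesis by (intro exI[of _ s] exI[of _ t]) (simp add: s(3) t(3))
qed

lemma dlt_closed:
  assumes c: "c \<in> Comp A"
  shows "dlt c (u, v) = (if u \<in> Comp A \<and> v \<in> Comp A \<and> c = meet u v then 1 else 0)"
proof -
  have "dlt c (u, v) = (\<Sum>p\<in>cont (length c). if act (fst p) c = u \<and> act (snd p) c = v then 1 else 0)"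
    by (simp add: dlt_def split_beta)
  also have "\<dots> = (if \<exists>p\<in>cont (length c). act (fst p) c = u \<and> act (snd p) c = v then 1 else 0)"
  proof (rule sum_ind_unique[OF finite_cont])
    fix p q assume pq: "p \<in> cont (length c)" "q \<in> cont (length c)"
      "act (fst p) c = u \<and> act (snd p) c = v" "act (fst q) c = u \<and> act (snd q) c = v"
    obtain s t where p: "p = (s, t)" by (cases p)
    obtain s' t' where q: "q = (s', t')" by (cases q)
    have "is_surj s" "length s = length c" "is_surj t" "length t = length c"
      using pq(1) unfolding p cont_def by auto
    moreover have "is_surj s'" "length s' = length c" "is_surj t'" "length t' = length c"
      using pq(2) unfolding q cont_def by auto
    moreover have "act s c = act s' c" "act t c = act t' c" using pq(3,4) unfolding p q by auto
    ultimately have "s = s'" "t = t'" using act_inj[OF c] by (metis, metis)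
    then show "p = q" using p q by simp
  qed
  also have "(\<exists>p\<in>cont (length c). act (fst p) c = u \<and> act (snd p) c = v) \<longleftrightarrow>
      (u \<in> Comp A \<and> v \<in> Comp A \<and> c = meet u v)"
  proof
    assume "\<exists>p\<in>cont (length c). act (fst p) c = u \<and> act (snd p) c = v"
    then obtain s t where st: "(s, t) \<in> cont (length c)" "act s c = u" "act t c = v" by auto
    then have "is_surj s" "length s = length c" "is_surj t" "length t = length c" by (auto simp: cont_def)
    then have "act s c \<in> Comp A" "act t c \<in> Comp A" using act_Comp[OF c] by auto
    then show "u \<in> Comp A \<and> v \<in> Comp A \<and> c = meet u v"
      using cont_meet[OF c st(1)] st(2,3) by simp
  next
    assume "u \<in> Comp A \<and> v \<in> Comp A \<and> c = meet u v"
    then have "\<exists>s t. (s, t) \<in> cont (length c) \<and> act s c = u \<and> act t c = v"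
      using cont_exists[OF c] by simp
    then obtain s t where "(s, t) \<in> cont (length c)" "act s c = u" "act t c = v"
      by (elim exE conjE)
    then show "\<exists>p\<in>cont (length c). act (fst p) c = u \<and> act (snd p) c = v"
      by (intro bexI[of _ "(s, t)"]) simp_all
  qed
  finally show ?thesis .
qed



lemma append_Comp:
  assumes "c \<in> Comp A" "d \<in> Comp B" "A \<inter> B = {}"
  shows "c @ d \<in> Comp (A \<union> B)"
  using assms unfolding Comp_iff cc_append by auto

lemma pos_app_A:
  assumes "c \<in> Comp A" "x \<in> A" shows "pos (c @ d) x = pos c x"
  using assms Comp_U[OF assms(1)] by (simp add: pos_append)

lemma pos_app_B:
  assumes "c \<in> Comp A" "x \<notin> A" shows "pos (c @ d) x = length c + pos d x"
  using assms Comp_U[OF assms(1)] by (simp add: pos_append)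

lemma oeq_pos_eq_le:
  "oeq A (f::_\<Rightarrow>'b::linorder) (g::_\<Rightarrow>'c::linorder) \<Longrightarrow> x \<in> A \<Longrightarrow> y \<in> A \<Longrightarrow> f x = f y \<Longrightarrow> g x = g y"
proof -
  assume a: "oeq A f g" "x \<in> A" "y \<in> A" "f x = f y"
  show "g x = g y" using oeq_eq[OF a(1) a(2) a(3)] a(4) by simp
qed

lemma qsh_closed:
  assumes c: "c \<in> Comp A" and d: "d \<in> Comp B" and AB: "A \<inter> B = {}"
  shows "qsh c d z = (if z \<in> Comp (A \<union> B) \<and> res z A = c \<and> res z B = d then 1 else 0)"
proof -
  let ?k = "length c" and ?l = "length d"
  define e where "e = c @ d"
  have e: "e \<in> Comp (A \<union> B)" unfolding e_def by (rule append_Comp[OF c d AB])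
  have le: "length e = ?k + ?l" by (simp add: e_def)
  have peA: "pos e x = pos c x" if "x \<in> A" for x unfolding e_def using pos_app_A[OF c that] .
  have peB: "pos e x = ?k + pos d x" if "x \<in> B" for x
    unfolding e_def using pos_app_B[OF c] that AB by blast
  have "qsh c d z = (\<Sum>s\<in>QSh ?k ?l. if act s e = z then 1 else 0)" by (simp add: qsh_def e_def)
  also have "\<dots> = (if \<exists>s\<in>QSh ?k ?l. act s e = z then 1 else 0)"
  proof (rule sum_ind_unique[OF finite_QSh])
    fix s s' assume "s \<in> QSh ?k ?l" "s' \<in> QSh ?k ?l" "act s e = z" "act s' e = z"
    then have "is_surj s" "length s = length e" "is_surj s'" "length s' = length e" "act s e = act s' e"
      using le unfolding QSh_def by auto
    then show "s = s'" by (rule act_inj[OF e])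
  qed
  also have "(\<exists>s\<in>QSh ?k ?l. act s e = z) \<longleftrightarrow> (z \<in> Comp (A \<union> B) \<and> res z A = c \<and> res z B = d)"
  proof
    assume "\<exists>s\<in>QSh ?k ?l. act s e = z"
    then obtain s where s: "s \<in> QSh ?k ?l" "act s e = z" by blast
    have sl: "length s = length e" "is_surj s" using s(1) le unfolding QSh_def by auto
    have so1: "sorted_wrt (<) (take ?k s)" and so2: "sorted_wrt (<) (drop ?k s)" using s(1) unfolding QSh_def by auto
    have z: "z \<in> Comp (A \<union> B)" using act_Comp[OF e sl(2) sl(1)] s(2) by simp
    have pz: "pos z x = s ! pos e x" if "x \<in> A \<union> B" for x using pos_act[OF e sl(2) sl(1) that] s(2) by simp
    have m1: "s ! i < s ! j" if "i < j" "j < ?k" for i j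
    proof -
      have "take ?k s ! i < take ?k s ! j" using so1 that sl(1) le unfolding sorted_wrt_iff_nth_less by auto
      then show ?thesis using that by simp
    qed
    have m2: "s ! (?k + i) < s ! (?k + j)" if "i < j" "j < ?l" for i j
    proof -
      have "drop ?k s ! i < drop ?k s ! j" using so2 that sl(1) le unfolding sorted_wrt_iff_nth_less by auto
      then show ?thesis using that sl(1) le by simp
    qed
    have O1: "oeq A (pos c) (pos z)" unfolding oeq_def
    proof (intro ballI)
      fix x y assume x: "x \<in> A" and y: "y \<in> A"
      have "pos c x < ?k" "pos c y < ?k" using pos_in[OF c x] pos_in[OF c y] by auto
      then show "(pos c x < pos c y) = (pos z x < pos z y)"
        using strict_iff[of ?k "\<lambda>i. s ! i", OF m1] pz[of x] pz[of y] x y peA[OF x] peA[OF y] by simp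
    qed
    have O2: "oeq A (pos (res z A)) (pos z)" using res_oeq'[OF z] by simp
    have rc: "res z A \<in> Comp A" using res_Comp[OF z] by simp
    have r1: "res z A = c" using oeq_comp_eq[OF rc c O2 O1] .
    have O3: "oeq B (pos d) (pos z)" unfolding oeq_def
    proof (intro ballI)
      fix x y assume x: "x \<in> B" and y: "y \<in> B"
      have "pos d x < ?l" "pos d y < ?l" using pos_in[OF d x] pos_in[OF d y] by auto
      then show "(pos d x < pos d y) = (pos z x < pos z y)"
        using strict_iff[of ?l "\<lambda>i. s ! (?k + i)", OF m2] pz[of x] pz[of y] x y peB[OF x] peB[OF y] by simp
    qed
    have O4: "oeq B (pos (res z B)) (pos z)" using res_oeq'[OF z] by simp
    have rd: "res z B \<in> Comp B" using res_Comp[OF z] by simp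
    have r2: "res z B = d" using oeq_comp_eq[OF rd d O4 O3] .
    show "z \<in> Comp (A \<union> B) \<and> res z A = c \<and> res z B = d" using z r1 r2 by simp
  next
    assume a: "z \<in> Comp (A \<union> B) \<and> res z A = c \<and> res z B = d"
    then have z: "z \<in> Comp (A \<union> B)" and r1: "res z A = c" and r2: "res z B = d" by auto
    have OA: "oeq A (pos c) (pos z)" using res_oeq'[OF z, of A] r1 by simp
    have OB: "oeq B (pos d) (pos z)" using res_oeq'[OF z, of B] r2 by simp
    have cns: "\<And>x y. x \<in> A \<union> B \<Longrightarrow> y \<in> A \<union> B \<Longrightarrow> pos e x = pos e y \<Longrightarrow> pos z x = pos z y"
    proof -
      fix x y assume xy: "x \<in> A \<union> B" "y \<in> A \<union> B" "pos e x = pos e y"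
      show "pos z x = pos z y"
      proof -
      consider "x \<in> A" "y \<in> A" | "x \<in> A" "y \<in> B" | "x \<in> B" "y \<in> A" | "x \<in> B" "y \<in> B"
        using xy(1,2) by blast
      then show ?thesis
      proof cases
        case 1
        then have "pos c x = pos c y" using xy(3) peA by simp
        then show ?thesis using oeq_pos_eq_le[OF OA 1] by simp
      next
        case 2
        then have "pos e x < ?k" "pos e y \<ge> ?k" using peA peB pos_in[OF c, of x] by auto
        then show ?thesis using xy(3) by simp
      next
        case 3
        then have "pos e y < ?k" "pos e x \<ge> ?k" using peA peB pos_in[OF c, of y] by auto
        then show ?thesis using xy(3) by simp
      next
        case 4
        then have "pos d x = pos d y" using xy(3) peB by simp
        then show ?thesis using oeq_pos_eq_le[OF OB 4] by simp
      qed
      qed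
    qed
    have ex: "\<exists>s. length s = length e \<and> is_surj s \<and> act s e = z \<and> (\<forall>x\<in>A \<union> B. s ! (pos e x) = pos z x)"
      by (rule act_exists[OF e z]) (rule cns)
    obtain s where s: "length s = length e" "is_surj s" "act s e = z" "\<forall>x\<in>A \<union> B. s ! (pos e x) = pos z x"
      using ex by (elim exE conjE) (rule that, assumption+)
    have "s \<in> QSh ?k ?l" unfolding QSh_def mem_Collect_eq
    proof (intro conjI)
      show "length s = ?k + ?l" "is_surj s" using s le by auto
      show "sorted_wrt (<) (take ?k s)" unfolding sorted_wrt_iff_nth_less
      proof (intro allI impI)
        fix i j assume ij: "i < j" "j < length (take ?k s)"
        then have ij': "i < ?k" "j < ?k" using s(1) le by auto
        obtain x where x: "x \<in> A" "pos c x = i" using Comp_rep[OF c ij'(1)] by blast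
        obtain y where y: "y \<in> A" "pos c y = j" using Comp_rep[OF c ij'(2)] by blast
        have "pos c x < pos c y \<longleftrightarrow> pos z x < pos z y" using OA[unfolded oeq_def] x(1) y(1) by blast
        then have "pos z x < pos z y" using x(2) y(2) ij by simp
        moreover have "s ! pos e x = pos z x" "s ! pos e y = pos z y" using s(4) x(1) y(1) by auto
        then have "s ! i = pos z x" "s ! j = pos z y" using peA[OF x(1)] peA[OF y(1)] x(2) y(2) by auto
        ultimately show "take ?k s ! i < take ?k s ! j" using ij' by simp
      qed
      show "sorted_wrt (<) (drop ?k s)" unfolding sorted_wrt_iff_nth_less
      proof (intro allI impI)
        fix i j assume ij: "i < j" "j < length (drop ?k s)"
        then have ij': "i < ?l" "j < ?l" using s(1) le by auto
        obtain x where x: "x \<in> B" "pos d x = i" using Comp_rep[OF d ij'(1)] by blast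
        obtain y where y: "y \<in> B" "pos d y = j" using Comp_rep[OF d ij'(2)] by blast
        have "pos d x < pos d y \<longleftrightarrow> pos z x < pos z y" using OB[unfolded oeq_def] x(1) y(1) by blast
        then have "pos z x < pos z y" using x(2) y(2) ij by simp
        moreover have "s ! pos e x = pos z x" "s ! pos e y = pos z y" using s(4) x(1) y(1) by auto
        then have "s ! (?k + i) = pos z x" "s ! (?k + j) = pos z y" using peB[OF x(1)] peB[OF y(1)] x(2) y(2) by auto
        ultimately show "drop ?k s ! i < drop ?k s ! j" using ij' s(1) le by simp
      qed
    qed
    then show "\<exists>s\<in>QSh ?k ?l. act s e = z" using s(3) by (intro bexI[of _ s]) simp_all
  qed
  finally show ?thesis .
qed



lemma sum_unique2:
  assumes "finite S" "\<And>a b. (a, b) \<in> S \<Longrightarrow> (a, b) \<noteq> (a0, b0) \<Longrightarrow> g a b = 0"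
  shows "(\<Sum>(a, b)\<in>S. g a b) = (if (a0, b0) \<in> S then g a0 b0 else 0)"
proof -
  have "(\<Sum>(a, b)\<in>S. g a b) = (if (a0, b0) \<in> S then (case (a0, b0) of (a, b) \<Rightarrow> g a b) else 0)"
  proof (rule sum_unique[OF assms(1)])
    fix p assume "p \<in> S" "p \<noteq> (a0, b0)"
    then show "(case p of (a, b) \<Rightarrow> g a b) = 0" using assms(2) by (cases p) simp
  qed
  then show ?thesis by simp
qed

lemma delta_closed:
  fixes x :: "'a set list \<Rightarrow> 'k::comm_ring_1"
  assumes A: "finite A"
  shows "delta A x (u, v) = (if u \<in> Comp A \<and> v \<in> Comp A then x (meet u v) else 0)"
proof -
  have "delta A x (u, v) = (\<Sum>c\<in>Comp A. x c * dlt c (u, v))" by (simp add: delta_def)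
  also have "\<dots> = (if meet u v \<in> Comp A then x (meet u v) * dlt (meet u v) (u, v) else 0)"
  proof (rule sum_unique[OF finite_Comp[OF A]])
    fix c assume "c \<in> Comp A" "c \<noteq> meet u v"
    then have "dlt c (u, v) = (0::'k)" using dlt_closed[of c A u v] by simp
    then show "x c * dlt c (u, v) = 0" by simp
  qed
  also have "\<dots> = (if u \<in> Comp A \<and> v \<in> Comp A then x (meet u v) else 0)"
  proof (cases "u \<in> Comp A \<and> v \<in> Comp A")
    case True
    then have "meet u v \<in> Comp A" using meet_Comp by blast
    moreover from this have "dlt (meet u v) (u, v) = (1::'k)" using dlt_closed[of "meet u v" A u v] True by simp
    ultimately show ?thesis using True by simp
  next
    case False
    have "meet u v \<in> Comp A \<Longrightarrow> dlt (meet u v) (u, v) = (0::'k)" using dlt_closed[of "meet u v" A u v] False by simp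
    then show ?thesis using False by auto
  qed
  finally show ?thesis .
qed

lemma mult_closed:
  fixes x y :: "'a set list \<Rightarrow> 'k::comm_ring_1"
  assumes A: "finite A" and B: "finite B" and AB: "A \<inter> B = {}"
  shows "mult A B x y z = (if z \<in> Comp (A \<union> B) then x (res z A) * y (res z B) else 0)"
proof -
  have "mult A B x y z = (\<Sum>(c, d)\<in>Comp A \<times> Comp B. x c * y d * qsh c d z)" by (simp add: mult_def)
  also have "\<dots> = (if (res z A, res z B) \<in> Comp A \<times> Comp B then
      x (res z A) * y (res z B) * qsh (res z A) (res z B) z else 0)"
  proof (rule sum_unique2)
    show "finite (Comp A \<times> Comp B)" using finite_Comp[OF A] finite_Comp[OF B] by simp
    fix c d assume "(c, d) \<in> Comp A \<times> Comp B" "(c, d) \<noteq> (res z A, res z B)"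
    then have "qsh c d z = (0::'k)" using qsh_closed[of c A d B z] AB by auto
    then show "x c * y d * qsh c d z = 0" by simp
  qed
  also have "\<dots> = (if z \<in> Comp (A \<union> B) then x (res z A) * y (res z B) else 0)"
  proof (cases "z \<in> Comp (A \<union> B)")
    case True
    then have "res z A \<in> Comp A" "res z B \<in> Comp B" using res_Comp[OF True] by auto
    moreover from this have "qsh (res z A) (res z B) z = (1::'k)" using qsh_closed[of "res z A" A "res z B" B z] AB True by simp
    ultimately show ?thesis using True by simp
  next
    case False
    have "res z A \<in> Comp A \<Longrightarrow> res z B \<in> Comp B \<Longrightarrow> qsh (res z A) (res z B) z = (0::'k)"
      using qsh_closed[of "res z A" A "res z B" B z] AB False by simp
    then show ?thesis using False by auto
  qed
  finally show ?thesis .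
qed

lemma oeq_refl: "oeq A f f" by (simp add: oeq_def)

lemma meet_assoc:
  assumes u: "u \<in> Comp A" and v: "v \<in> Comp A" and w: "w \<in> Comp A"
  shows "meet (meet u v) w = meet u (meet v w)"
proof -
  have uv: "meet u v \<in> Comp A" and vw: "meet v w \<in> Comp A" using meet_Comp u v w by auto
  let ?F = "\<lambda>x. ((pos u x, pos v x), pos w x)"
  have 1: "oeq A (pos (meet (meet u v) w)) ?F"
    using oeq_trans[OF meet_oeq'[OF uv w] oeq_pair[OF meet_oeq'[OF u v] oeq_refl]] .
  have 2: "oeq A (pos (meet u (meet v w))) (\<lambda>x. (pos u x, (pos v x, pos w x)))"
    using oeq_trans[OF meet_oeq'[OF u vw] oeq_pair[OF oeq_refl meet_oeq'[OF v w]]] .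
  have 3: "oeq A (\<lambda>x. (pos u x, (pos v x, pos w x))) ?F"
    unfolding oeq_def by (auto simp: lexless)
  show ?thesis using oeq_comp_eq[OF meet_Comp[OF uv w] meet_Comp[OF u vw] 1 oeq_trans[OF 2 3]] .
qed

definition a0 :: "'a set \<Rightarrow> 'a set list" where
  "a0 A = (if A = {} then [] else [A])"

lemma Comp_empty: "Comp {} = ({[]} :: 'a set list set)"
proof (rule equalityI)
  show "Comp {} \<subseteq> ({[]} :: 'a set list set)"
  proof
    fix c :: "'a set list" assume "c \<in> Comp {}"
    then have "\<Union>(set c) = {}" "\<forall>X\<in>set c. X \<noteq> {}" by (auto simp: Comp_def is_comp_def)
    then show "c \<in> {[]}" by (cases c) auto
  qed
  show "({[]} :: 'a set list set) \<subseteq> Comp {}" by (simp add: Comp_iff)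
qed

lemma a0_Comp: "a0 A \<in> Comp A"
  by (simp add: a0_def Comp_iff)

lemma le1_a0: "a \<in> Comp A \<Longrightarrow> length a \<le> 1 \<Longrightarrow> a = a0 A"
proof -
  assume a: "a \<in> Comp A" "length a \<le> 1"
  have U: "\<Union>(set a) = A" by (rule Comp_U[OF a(1)])
  show "a = a0 A"
  proof (cases a)
    case Nil
    then have "A = {}" using U by simp
    then show ?thesis using Nil by (simp add: a0_def)
  next
    case (Cons X a')
    then have a': "a' = []" using a(2) by simp
    then have "X = A" using U Cons by simp
    moreover have "X \<noteq> {}" using Comp_ne[OF a(1), of 0] Cons by simp
    ultimately show ?thesis using Cons a' by (simp add: a0_def)
  qed
qed

lemma meet_a0_left: "w \<in> Comp A \<Longrightarrow> meet (a0 A) w = w"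
proof (cases "A = {}")
  case True
  assume "w \<in> Comp A" then show ?thesis using True by (simp add: a0_def Comp_empty)
next
  case False
  assume "w \<in> Comp A" then show ?thesis using False res_id by (simp add: a0_def meet_Cons)
qed

lemma meet_single_right: "cc w \<Longrightarrow> \<Union>(set w) \<subseteq> A \<Longrightarrow> meet w [A] = w"
proof (induction w)
  case Nil then show ?case by simp
next
  case (Cons X w)
  then have "X \<noteq> {}" "X \<subseteq> A" by auto
  then have "res [A] X = [X]" by (auto simp: res_Cons Int_absorb1)
  then show ?case using Cons by (simp add: meet_Cons)
qed

lemma meet_a0_right: "w \<in> Comp A \<Longrightarrow> meet w (a0 A) = w"
proof (cases "A = {}")
  case True
  assume "w \<in> Comp A" then show ?thesis using True by (simp add: a0_def Comp_empty)
next
  case False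
  assume "w \<in> Comp A" then show ?thesis using False meet_single_right[of w A]
    by (simp add: a0_def Comp_iff)
qed

lemma eps'_a0: "a \<in> Comp A \<Longrightarrow> eps' a = (if a = a0 A then 1 else 0)"
proof -
  assume a: "a \<in> Comp A"
  show ?thesis
  proof (cases "a = a0 A")
    case True
    have "length (a0 A) \<le> 1" by (simp add: a0_def)
    then show ?thesis using True by (simp add: eps'_def)
  next
    case False
    then have "\<not> length a \<le> 1" using le1_a0[OF a] by blast
    then show ?thesis using False by (simp add: eps'_def)
  qed
qed



lemma res_meet:
  assumes u: "u \<in> Comp C" and v: "v \<in> Comp C" and X: "X \<subseteq> C"
  shows "res (meet u v) X = meet (res u X) (res v X)"
proof -
  have m: "meet u v \<in> Comp C" using meet_Comp[OF u v] .
  have ru: "res u X \<in> Comp X" and rv: "res v X \<in> Comp X" using res_Comp[OF u X] res_Comp[OF v X] by auto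
  let ?F = "\<lambda>x. (pos u x, pos v x)"
  have 1: "oeq X (pos (res (meet u v) X)) ?F"
    using oeq_trans[OF res_oeq'[OF m X] oeq_subset[OF meet_oeq'[OF u v] X]] .
  have 2: "oeq X (pos (meet (res u X) (res v X))) ?F"
    using oeq_trans[OF meet_oeq'[OF ru rv] oeq_pair[OF res_oeq'[OF u X] res_oeq'[OF v X]]] .
  show ?thesis using oeq_comp_eq[OF res_Comp[OF m X] meet_Comp[OF ru rv] 1 2] .
qed

lemma res_a0: "A \<subseteq> C \<Longrightarrow> res (a0 C) A = a0 A"
  by (auto simp: a0_def res_Cons Int_absorb1)

lemma epsp_closed:
  fixes x :: "'a set list \<Rightarrow> 'k::comm_ring_1"
  assumes A: "finite A"
  shows "epsp A x = x (a0 A)"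
proof -
  have "epsp A x = (\<Sum>c\<in>Comp A. x c * eps' c)" by (simp add: epsp_def)
  also have "\<dots> = (if a0 A \<in> Comp A then x (a0 A) * eps' (a0 A) else 0)"
  proof (rule sum_unique[OF finite_Comp[OF A]])
    fix c assume "c \<in> Comp A" "c \<noteq> a0 A"
    then have "eps' c = (0::'k)" using eps'_a0[of c A] by simp
    then show "x c * eps' c = 0" by simp
  qed
  also have "\<dots> = x (a0 A)"
  proof -
    have "eps' (a0 A) = (1::'k)" using eps'_a0[OF a0_Comp[of A]] by simp
    then show ?thesis using a0_Comp[of A] by simp
  qed
  finally show ?thesis .
qed

lemma coassoc_L:
  fixes x :: "'a set list \<Rightarrow> 'k::comm_ring_1"
  assumes A: "finite A"
  shows "delta_id A (delta A x) (u, v, w) =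
    (if u \<in> Comp A \<and> v \<in> Comp A \<and> w \<in> Comp A then x (meet (meet u v) w) else 0)"
proof -
  have "delta_id A (delta A x) (u, v, w) =
      (\<Sum>(a, b)\<in>Comp A \<times> Comp A. delta A x (a, b) * dlt a (u, v) * (if b = w then 1 else 0))"
    by (simp add: delta_id_def)
  also have "\<dots> = (if (meet u v, w) \<in> Comp A \<times> Comp A then
      delta A x (meet u v, w) * dlt (meet u v) (u, v) * (if w = w then 1 else 0) else 0)"
  proof (rule sum_unique2)
    show "finite (Comp A \<times> Comp A)" using finite_Comp[OF A] by simp
    fix a b assume ab: "(a, b) \<in> Comp A \<times> Comp A" "(a, b) \<noteq> (meet u v, w)"
    show "delta A x (a, b) * dlt a (u, v) * (if b = w then 1 else 0) = 0"
    proof (cases "b = w")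
      case True
      then have "a \<noteq> meet u v" using ab by simp
      then have "dlt a (u, v) = (0::'k)" using dlt_closed[of a A u v] ab(1) by simp
      then show ?thesis by simp
    qed simp
  qed
  also have "\<dots> = (if u \<in> Comp A \<and> v \<in> Comp A \<and> w \<in> Comp A then x (meet (meet u v) w) else 0)"
  proof (cases "u \<in> Comp A \<and> v \<in> Comp A \<and> w \<in> Comp A")
    case True
    then have m: "meet u v \<in> Comp A" using meet_Comp by blast
    then have "dlt (meet u v) (u, v) = (1::'k)" using dlt_closed[of "meet u v" A u v] True by simp
    then show ?thesis using True m delta_closed[OF A, of x "meet u v" w] by simp
  next
    case False
    have "meet u v \<in> Comp A \<Longrightarrow> w \<in> Comp A \<Longrightarrow> dlt (meet u v) (u, v) = (0::'k)"
      using dlt_closed[of "meet u v" A u v] False by auto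
    then show ?thesis using False by auto
  qed
  finally show ?thesis .
qed

lemma coassoc_R:
  fixes x :: "'a set list \<Rightarrow> 'k::comm_ring_1"
  assumes A: "finite A"
  shows "id_delta A (delta A x) (u, v, w) =
    (if u \<in> Comp A \<and> v \<in> Comp A \<and> w \<in> Comp A then x (meet u (meet v w)) else 0)"
proof -
  have "id_delta A (delta A x) (u, v, w) =
      (\<Sum>(a, b)\<in>Comp A \<times> Comp A. delta A x (a, b) * (if a = u then 1 else 0) * dlt b (v, w))"
    by (simp add: id_delta_def)
  also have "\<dots> = (if (u, meet v w) \<in> Comp A \<times> Comp A then
      delta A x (u, meet v w) * (if u = u then 1 else 0) * dlt (meet v w) (v, w) else 0)"
  proof (rule sum_unique2)
    show "finite (Comp A \<times> Comp A)" using finite_Comp[OF A] by simp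
    fix a b assume ab: "(a, b) \<in> Comp A \<times> Comp A" "(a, b) \<noteq> (u, meet v w)"
    show "delta A x (a, b) * (if a = u then 1 else 0) * dlt b (v, w) = 0"
    proof (cases "a = u")
      case True
      then have "b \<noteq> meet v w" using ab by simp
      then have "dlt b (v, w) = (0::'k)" using dlt_closed[of b A v w] ab(1) by simp
      then show ?thesis by simp
    qed simp
  qed
  also have "\<dots> = (if u \<in> Comp A \<and> v \<in> Comp A \<and> w \<in> Comp A then x (meet u (meet v w)) else 0)"
  proof (cases "u \<in> Comp A \<and> v \<in> Comp A \<and> w \<in> Comp A")
    case True
    then have m: "meet v w \<in> Comp A" using meet_Comp by blast
    then have "dlt (meet v w) (v, w) = (1::'k)" using dlt_closed[of "meet v w" A v w] True by simp
    then show ?thesis using True m delta_closed[OF A, of x u "meet v w"] by simp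
  next
    case False
    have "u \<in> Comp A \<Longrightarrow> meet v w \<in> Comp A \<Longrightarrow> dlt (meet v w) (v, w) = (0::'k)"
      using dlt_closed[of "meet v w" A v w] False by auto
    then show ?thesis using False by auto
  qed
  finally show ?thesis .
qed

lemma coassoc:
  fixes x :: "'a set list \<Rightarrow> 'k::comm_ring_1"
  assumes A: "finite A"
  shows "delta_id A (delta A x) = id_delta A (delta A x)"
proof (rule ext)
  fix p :: "'a set list \<times> 'a set list \<times> 'a set list"
  obtain u v w where p: "p = (u, v, w)" by (cases p)
  show "delta_id A (delta A x) p = id_delta A (delta A x) p"
    unfolding p coassoc_L[OF A] coassoc_R[OF A] using meet_assoc[of u A v w] by simp
qed

lemma counit_L:
  fixes x :: "'a set list \<Rightarrow> 'k::comm_ring_1"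
  assumes A: "finite A" and vx: "vec A x"
  shows "eps_id A (delta A x) = x"
proof (rule ext)
  fix w
  have "eps_id A (delta A x) w =
      (\<Sum>(a, b)\<in>Comp A \<times> Comp A. delta A x (a, b) * eps' a * (if b = w then 1 else 0))"
    by (simp add: eps_id_def)
  also have "\<dots> = (if (a0 A, w) \<in> Comp A \<times> Comp A then
      delta A x (a0 A, w) * eps' (a0 A) * (if w = w then 1 else 0) else 0)"
  proof (rule sum_unique2)
    show "finite (Comp A \<times> Comp A)" using finite_Comp[OF A] by simp
    fix a b assume ab: "(a, b) \<in> Comp A \<times> Comp A" "(a, b) \<noteq> (a0 A, w)"
    show "delta A x (a, b) * eps' a * (if b = w then 1 else 0) = 0"
    proof (cases "b = w")
      case True
      then have "a \<noteq> a0 A" using ab by simp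
      then have "eps' a = (0::'k)" using eps'_a0[of a A] ab(1) by simp
      then show ?thesis by simp
    qed simp
  qed
  also have "\<dots> = x w"
  proof (cases "w \<in> Comp A")
    case True
    have "eps' (a0 A) = (1::'k)" using eps'_a0[OF a0_Comp[of A]] by simp
    then show ?thesis using True a0_Comp[of A] delta_closed[OF A, of x "a0 A" w]
      meet_a0_left[OF True] by simp
  next
    case False
    then show ?thesis using vx by (simp add: vec_def)
  qed
  finally show "eps_id A (delta A x) w = x w" .
qed

lemma counit_R:
  fixes x :: "'a set list \<Rightarrow> 'k::comm_ring_1"
  assumes A: "finite A" and vx: "vec A x"
  shows "id_eps A (delta A x) = x"
proof (rule ext)
  fix w
  have "id_eps A (delta A x) w =
      (\<Sum>(a, b)\<in>Comp A \<times> Comp A. delta A x (a, b) * (if a = w then 1 else 0) * eps' b)"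
    by (simp add: id_eps_def)
  also have "\<dots> = (if (w, a0 A) \<in> Comp A \<times> Comp A then
      delta A x (w, a0 A) * (if w = w then 1 else 0) * eps' (a0 A) else 0)"
  proof (rule sum_unique2)
    show "finite (Comp A \<times> Comp A)" using finite_Comp[OF A] by simp
    fix a b assume ab: "(a, b) \<in> Comp A \<times> Comp A" "(a, b) \<noteq> (w, a0 A)"
    show "delta A x (a, b) * (if a = w then 1 else 0) * eps' b = 0"
    proof (cases "a = w")
      case True
      then have "b \<noteq> a0 A" using ab by simp
      then have "eps' b = (0::'k)" using eps'_a0[of b A] ab(1) by simp
      then show ?thesis by simp
    qed simp
  qed
  also have "\<dots> = x w"
  proof (cases "w \<in> Comp A")
    case True
    have "eps' (a0 A) = (1::'k)" using eps'_a0[OF a0_Comp[of A]] by simp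
    then show ?thesis using True a0_Comp[of A] delta_closed[OF A, of x w "a0 A"]
      meet_a0_right[OF True] by simp
  next
    case False
    then show ?thesis using vx by (simp add: vec_def)
  qed
  finally show "id_eps A (delta A x) w = x w" .
qed

lemma unit_delta: "delta {} (unit :: 'a set list \<Rightarrow> 'k::comm_ring_1) = (\<lambda>(u, v). unit u * unit v)"
proof (rule ext)
  fix p :: "'a set list \<times> 'a set list"
  obtain u v where p: "p = (u, v)" by (cases p)
  show "delta {} (unit :: 'a set list \<Rightarrow> 'k) p = (\<lambda>(u, v). unit u * unit v) p"
    unfolding p delta_closed[OF finite.emptyI] Comp_empty by (simp add: unit_def basis_def)
qed

lemma unit_eps: "epsp {} (unit :: 'a set list \<Rightarrow> 'k::comm_ring_1) = 1"
  unfolding epsp_closed[OF finite.emptyI] by (simp add: unit_def basis_def a0_def)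

lemma epsD_compat:
  fixes x :: "'a set list \<Rightarrow> 'k::comm_ring_1"
  shows "epsD_id (delta {} x) = (\<lambda>w. epsD x * unit w)"
proof (rule ext)
  fix w :: "'a set list"
  show "epsD_id (delta {} x) w = epsD x * unit w"
    by (simp add: epsD_id_def Comp_empty delta_closed epsD_def unit_def basis_def)
qed



lemma mult_delta_pt:
  fixes x y :: "'a set list \<Rightarrow> 'k::comm_ring_1"
  assumes A: "finite A" and B: "finite B" and AB: "A \<inter> B = {}"
  shows "mult2 A B (delta A x) (delta B y) (u, v) =
    (if u \<in> Comp (A \<union> B) \<and> v \<in> Comp (A \<union> B) then
       x (meet (res u A) (res v A)) * y (meet (res u B) (res v B)) else 0)"
proof -
  let ?S = "delta A x" and ?T = "delta B y"
  let ?CA = "Comp A \<times> Comp A" and ?CB = "Comp B \<times> Comp B"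
  have fA: "finite ?CA" and fB: "finite ?CB" using finite_Comp[OF A] finite_Comp[OF B] by auto
  define G where "G a b = (if (res u B, res v B) \<in> ?CB then
      ?S (a, b) * ?T (res u B, res v B) * qsh a (res u B) u * qsh b (res v B) v else 0)" for a b
  have inner: "(\<Sum>(c, d)\<in>?CB. ?S (a, b) * ?T (c, d) * qsh a c u * qsh b d v) = G a b"
    if ab: "(a, b) \<in> ?CA" for a b
  proof -
    have "(\<Sum>(c, d)\<in>?CB. ?S (a, b) * ?T (c, d) * qsh a c u * qsh b d v) =
      (if (res u B, res v B) \<in> ?CB then
      ?S (a, b) * ?T (res u B, res v B) * qsh a (res u B) u * qsh b (res v B) v else 0)"
    proof (rule sum_unique2[OF fB])
      fix c d assume cd: "(c, d) \<in> ?CB" "(c, d) \<noteq> (res u B, res v B)"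
      show "?S (a, b) * ?T (c, d) * qsh a c u * qsh b d v = 0"
      proof (cases "c = res u B")
        case True
        then have "d \<noteq> res v B" using cd by simp
        then have "qsh b d v = (0::'k)" using qsh_closed[of b A d B v] ab cd(1) AB by auto
        then show ?thesis by simp
      next
        case False
        then have "qsh a c u = (0::'k)" using qsh_closed[of a A c B u] ab cd(1) AB by auto
        then show ?thesis by simp
      qed
    qed
    then show ?thesis by (simp add: G_def)
  qed
  have "mult2 A B ?S ?T (u, v) = (\<Sum>(a, b)\<in>?CA. \<Sum>(c, d)\<in>?CB. ?S (a, b) * ?T (c, d) * qsh a c u * qsh b d v)"
    by (simp add: mult2_def)
  also have "\<dots> = (\<Sum>(a, b)\<in>?CA. G a b)"
    by (rule sum.cong) (auto simp: inner)
  also have "\<dots> = (if (res u A, res v A) \<in> ?CA then G (res u A) (res v A) else 0)"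
  proof (rule sum_unique2[OF fA])
    fix a b assume ab: "(a, b) \<in> ?CA" "(a, b) \<noteq> (res u A, res v A)"
    show "G a b = 0"
    proof (cases "(res u B, res v B) \<in> ?CB")
      case True
      show ?thesis
      proof (cases "a = res u A")
        case True
        then have "b \<noteq> res v A" using ab by simp
        then have "qsh b (res v B) v = (0::'k)" using qsh_closed[of b A "res v B" B v] ab(1) \<open>(res u B, res v B) \<in> ?CB\<close> AB by auto
        then show ?thesis by (simp add: G_def)
      next
        case False
        then have "qsh a (res u B) u = (0::'k)" using qsh_closed[of a A "res u B" B u] ab(1) \<open>(res u B, res v B) \<in> ?CB\<close> AB by auto
        then show ?thesis by (simp add: G_def)
      qed
    next
      case False then show ?thesis by (auto simp: G_def)
    qed
  qed
  also have "\<dots> = (if u \<in> Comp (A \<union> B) \<and> v \<in> Comp (A \<union> B) then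
       x (meet (res u A) (res v A)) * y (meet (res u B) (res v B)) else 0)"
  proof (cases "u \<in> Comp (A \<union> B) \<and> v \<in> Comp (A \<union> B)")
    case True
    then have u: "u \<in> Comp (A \<union> B)" and v: "v \<in> Comp (A \<union> B)" by auto
    have r: "res u A \<in> Comp A" "res v A \<in> Comp A" "res u B \<in> Comp B" "res v B \<in> Comp B"
      using res_Comp[OF u] res_Comp[OF v] by auto
    have q: "qsh (res u A) (res u B) u = (1::'k)" "qsh (res v A) (res v B) v = (1::'k)"
      using qsh_closed[OF r(1) r(3) AB, of u] qsh_closed[OF r(2) r(4) AB, of v] u v by auto
    show ?thesis using True r q delta_closed[OF A, of x "res u A" "res v A"]
      delta_closed[OF B, of y "res u B" "res v B"] by (simp add: G_def)
  next
    case False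
    have "res u A \<in> Comp A \<Longrightarrow> res u B \<in> Comp B \<Longrightarrow> qsh (res u A) (res u B) u = (0::'k) \<or>
        (res v A \<in> Comp A \<longrightarrow> res v B \<in> Comp B \<longrightarrow> qsh (res v A) (res v B) v = (0::'k))"
      using qsh_closed[of "res u A" A "res u B" B u] qsh_closed[of "res v A" A "res v B" B v] AB False by auto
    then show ?thesis using False by (auto simp: G_def)
  qed
  finally show ?thesis .
qed

lemma mult_delta:
  fixes x y :: "'a set list \<Rightarrow> 'k::comm_ring_1"
  assumes A: "finite A" and B: "finite B" and AB: "A \<inter> B = {}"
  shows "delta (A \<union> B) (mult A B x y) = mult2 A B (delta A x) (delta B y)"
proof (rule ext)
  fix p :: "'a set list \<times> 'a set list"
  obtain u v where p: "p = (u, v)" by (cases p)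
  have AuB: "finite (A \<union> B)" using A B by simp
  have "delta (A \<union> B) (mult A B x y) (u, v) = mult2 A B (delta A x) (delta B y) (u, v)"
  proof (cases "u \<in> Comp (A \<union> B) \<and> v \<in> Comp (A \<union> B)")
    case True
    then have u: "u \<in> Comp (A \<union> B)" and v: "v \<in> Comp (A \<union> B)" by auto
    have m: "meet u v \<in> Comp (A \<union> B)" using meet_Comp[OF u v] .
    show ?thesis unfolding delta_closed[OF AuB] mult_delta_pt[OF A B AB] mult_closed[OF A B AB]
      using True m res_meet[OF u v, of A] res_meet[OF u v, of B] by simp
  next
    case False
    then show ?thesis unfolding delta_closed[OF AuB] mult_delta_pt[OF A B AB] by auto
  qed
  then show "delta (A \<union> B) (mult A B x y) p = mult2 A B (delta A x) (delta B y) p" using p by simp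
qed

lemma mult_eps:
  fixes x y :: "'a set list \<Rightarrow> 'k::comm_ring_1"
  assumes A: "finite A" and B: "finite B" and AB: "A \<inter> B = {}"
  shows "epsp (A \<union> B) (mult A B x y) = epsp A x * epsp B y"
proof -
  have AuB: "finite (A \<union> B)" using A B by simp
  show ?thesis unfolding epsp_closed[OF AuB] epsp_closed[OF A] epsp_closed[OF B] mult_closed[OF A B AB]
    using a0_Comp[of "A \<union> B"] res_a0[of A "A \<union> B"] res_a0[of B "A \<union> B"] by simp
qed

lemma Delta_closed:
  fixes x :: "'a set list \<Rightarrow> 'k::comm_ring_1"
  assumes AuB: "finite (A \<union> B)"
  shows "Delta A B x (a, b) = (if a @ b \<in> Comp (A \<union> B) \<and> \<Union>(set a) = A then x (a @ b) else 0)"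
proof -
  have "Delta A B x (a, b) = (\<Sum>c\<in>Comp (A \<union> B). x c * (if c = a @ b \<and> \<Union>(set a) = A then 1 else 0))"
    by (simp add: Delta_def dec_def)
  also have "\<dots> = (if a @ b \<in> Comp (A \<union> B) then x (a @ b) * (if a @ b = a @ b \<and> \<Union>(set a) = A then 1 else 0) else 0)"
    by (rule sum_unique[OF finite_Comp[OF AuB]]) simp
  also have "\<dots> = (if a @ b \<in> Comp (A \<union> B) \<and> \<Union>(set a) = A then x (a @ b) else 0)" by simp
  finally show ?thesis .
qed

lemma app_Comp_iff:
  assumes AB: "A \<inter> B = {}"
  shows "(u @ v \<in> Comp (A \<union> B) \<and> \<Union>(set u) = A) \<longleftrightarrow> (u \<in> Comp A \<and> v \<in> Comp B)"
proof
  assume a: "u @ v \<in> Comp (A \<union> B) \<and> \<Union>(set u) = A"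
  then have c: "cc u" "cc v" "\<Union>(set u) \<inter> \<Union>(set v) = {}" "\<Union>(set u) \<union> \<Union>(set v) = A \<union> B"
    by (auto simp: Comp_iff cc_append)
  have U: "\<Union>(set u) = A" using a by simp
  have "\<Union>(set v) = B"
  proof
    show "\<Union>(set v) \<subseteq> B" using c(3) c(4) U by blast
    show "B \<subseteq> \<Union>(set v)" using c(4) U AB by blast
  qed
  then show "u \<in> Comp A \<and> v \<in> Comp B" using c U by (simp add: Comp_iff)
next
  assume "u \<in> Comp A \<and> v \<in> Comp B"
  then show "u @ v \<in> Comp (A \<union> B) \<and> \<Union>(set u) = A" using append_Comp[of u A v B] AB Comp_U[of u A] by auto
qed

lemma meet_res_eq: "\<Union>(set u) \<subseteq> A \<Longrightarrow> meet u (res w A) = meet u w"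
  by (induction u) (auto simp: meet_Cons res_res)

lemma Delta_L:
  fixes x :: "'a set list \<Rightarrow> 'k::comm_ring_1"
  assumes AuB: "finite (A \<union> B)"
  shows "Delta_id A B (delta (A \<union> B) x) (u, v, w) =
    (if u @ v \<in> Comp (A \<union> B) \<and> \<Union>(set u) = A \<and> w \<in> Comp (A \<union> B) then x (meet (u @ v) w) else 0)"
proof -
  let ?C = "Comp (A \<union> B) \<times> Comp (A \<union> B)"
  have "Delta_id A B (delta (A \<union> B) x) (u, v, w) =
      (\<Sum>(a, b)\<in>?C. delta (A \<union> B) x (a, b) * dec A a (u, v) * (if b = w then 1 else 0))"
    by (simp add: Delta_id_def)
  also have "\<dots> = (if (u @ v, w) \<in> ?C then
      delta (A \<union> B) x (u @ v, w) * dec A (u @ v) (u, v) * (if w = w then 1 else 0) else 0)"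
  proof (rule sum_unique2)
    show "finite ?C" using finite_Comp[OF AuB] by simp
    fix a b assume ab: "(a, b) \<in> ?C" "(a, b) \<noteq> (u @ v, w)"
    show "delta (A \<union> B) x (a, b) * dec A a (u, v) * (if b = w then 1 else 0) = 0"
    proof (cases "b = w")
      case True
      then have "a \<noteq> u @ v" using ab by simp
      then have "dec A a (u, v) = (0::'k)" by (simp add: dec_def)
      then show ?thesis by simp
    qed simp
  qed
  also have "\<dots> = (if u @ v \<in> Comp (A \<union> B) \<and> \<Union>(set u) = A \<and> w \<in> Comp (A \<union> B) then x (meet (u @ v) w) else 0)"
    using delta_closed[OF AuB, of x "u @ v" w] by (simp add: dec_def)
  finally show ?thesis .
qed

lemma Delta_R:
  fixes x :: "'a set list \<Rightarrow> 'k::comm_ring_1"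
  assumes A: "finite A" and B: "finite B" and AB: "A \<inter> B = {}"
  shows "m1324_dd A B (Delta A B x) (u, v, w) =
    (if u \<in> Comp A \<and> v \<in> Comp B \<and> w \<in> Comp (A \<union> B) then x (meet u (res w A) @ meet v (res w B)) else 0)"
proof -
  have AuB: "finite (A \<union> B)" using A B by simp
  let ?S = "Delta A B x"
  let ?C = "Comp A \<times> Comp B"
  have fC: "finite ?C" using finite_Comp[OF A] finite_Comp[OF B] by simp
  define H where "H a b = (if (res w A, res w B) \<in> ?C then
      ?S (a, b) * dlt a (u, res w A) * dlt b (v, res w B) * qsh (res w A) (res w B) w else 0)" for a b
  have inner: "(\<Sum>(q, r)\<in>?C. ?S (a, b) * dlt a (u, q) * dlt b (v, r) * qsh q r w) = H a b" for a b
  proof -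
    have "(\<Sum>(q, r)\<in>?C. ?S (a, b) * dlt a (u, q) * dlt b (v, r) * qsh q r w) =
      (if (res w A, res w B) \<in> ?C then
      ?S (a, b) * dlt a (u, res w A) * dlt b (v, res w B) * qsh (res w A) (res w B) w else 0)"
    proof (rule sum_unique2[OF fC])
      fix q r assume qr: "(q, r) \<in> ?C" "(q, r) \<noteq> (res w A, res w B)"
      then have "qsh q r w = (0::'k)" using qsh_closed[of q A r B w] AB by auto
      then show "?S (a, b) * dlt a (u, q) * dlt b (v, r) * qsh q r w = 0" by simp
    qed
    then show ?thesis by (simp add: H_def)
  qed
  have "m1324_dd A B ?S (u, v, w) = (\<Sum>(a, b)\<in>?C. \<Sum>(q, r)\<in>?C. ?S (a, b) * dlt a (u, q) * dlt b (v, r) * qsh q r w)"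
    by (simp add: m1324_dd_def)
  also have "\<dots> = (\<Sum>(a, b)\<in>?C. H a b)"
    by (rule sum.cong) (auto simp: inner)
  also have "\<dots> = (if (meet u (res w A), meet v (res w B)) \<in> ?C then H (meet u (res w A)) (meet v (res w B)) else 0)"
  proof (rule sum_unique2[OF fC])
    fix a b assume ab: "(a, b) \<in> ?C" "(a, b) \<noteq> (meet u (res w A), meet v (res w B))"
    show "H a b = 0"
    proof (cases "a = meet u (res w A)")
      case True
      then have "b \<noteq> meet v (res w B)" using ab by simp
      then have "dlt b (v, res w B) = (0::'k)" using dlt_closed[of b B v "res w B"] ab(1) by auto
      then show ?thesis by (simp add: H_def)
    next
      case False
      then have "dlt a (u, res w A) = (0::'k)" using dlt_closed[of a A u "res w A"] ab(1) by auto
      then show ?thesis by (simp add: H_def)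
    qed
  qed
  also have "\<dots> = (if u \<in> Comp A \<and> v \<in> Comp B \<and> w \<in> Comp (A \<union> B) then x (meet u (res w A) @ meet v (res w B)) else 0)"
  proof (cases "u \<in> Comp A \<and> v \<in> Comp B \<and> w \<in> Comp (A \<union> B)")
    case True
    then have u: "u \<in> Comp A" and v: "v \<in> Comp B" and w: "w \<in> Comp (A \<union> B)" by auto
    have r: "res w A \<in> Comp A" "res w B \<in> Comp B" using res_Comp[OF w] by auto
    have m: "meet u (res w A) \<in> Comp A" "meet v (res w B) \<in> Comp B"
      using meet_Comp[OF u r(1)] meet_Comp[OF v r(2)] by auto
    have q: "qsh (res w A) (res w B) w = (1::'k)" using qsh_closed[OF r AB, of w] w by simp
    have d: "dlt (meet u (res w A)) (u, res w A) = (1::'k)" "dlt (meet v (res w B)) (v, res w B) = (1::'k)"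
      using dlt_closed[OF m(1), of u "res w A"] dlt_closed[OF m(2), of v "res w B"] u v r by auto
    have s: "?S (meet u (res w A), meet v (res w B)) = x (meet u (res w A) @ meet v (res w B))"
      using Delta_closed[OF AuB, of x "meet u (res w A)" "meet v (res w B)"]
        append_Comp[OF m AB] Comp_U[OF m(1)] by simp
    show ?thesis using True r m q d s by (simp add: H_def)
  next
    case False
    have "res w A \<in> Comp A \<Longrightarrow> res w B \<in> Comp B \<Longrightarrow> meet u (res w A) \<in> Comp A \<Longrightarrow> meet v (res w B) \<in> Comp B \<Longrightarrow>
        dlt (meet u (res w A)) (u, res w A) = (0::'k) \<or> dlt (meet v (res w B)) (v, res w B) = (0::'k) \<or>
        qsh (res w A) (res w B) w = (0::'k)"
      using dlt_closed[of "meet u (res w A)" A u "res w A"] dlt_closed[of "meet v (res w B)" B v "res w B"]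
        qsh_closed[of "res w A" A "res w B" B w] AB False by auto
    then show ?thesis using False by (auto simp: H_def)
  qed
  finally show ?thesis .
qed

lemma Delta_compat:
  fixes x :: "'a set list \<Rightarrow> 'k::comm_ring_1"
  assumes A: "finite A" and B: "finite B" and AB: "A \<inter> B = {}"
  shows "Delta_id A B (delta (A \<union> B) x) = m1324_dd A B (Delta A B x)"
proof (rule ext)
  fix p :: "'a set list \<times> 'a set list \<times> 'a set list"
  obtain u v w where p: "p = (u, v, w)" by (cases p)
  have AuB: "finite (A \<union> B)" using A B by simp
  have "Delta_id A B (delta (A \<union> B) x) (u, v, w) = m1324_dd A B (Delta A B x) (u, v, w)"
  proof (cases "u \<in> Comp A \<and> v \<in> Comp B \<and> w \<in> Comp (A \<union> B)")
    case True
    then have u: "u \<in> Comp A" and v: "v \<in> Comp B" and w: "w \<in> Comp (A \<union> B)" by auto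
    have "meet (u @ v) w = meet u (res w A) @ meet v (res w B)"
      unfolding meet_append using meet_res_eq[of u A w] meet_res_eq[of v B w] Comp_U[OF u] Comp_U[OF v] by simp
    then show ?thesis unfolding Delta_L[OF AuB] Delta_R[OF A B AB] using app_Comp_iff[OF AB, of u v] True by simp
  next
    case False
    then show ?thesis unfolding Delta_L[OF AuB] Delta_R[OF A B AB] using app_Comp_iff[OF AB, of u v] by auto
  qed
  then show "Delta_id A B (delta (A \<union> B) x) p = m1324_dd A B (Delta A B x) p" using p by simp
qed



lemma Union_map_image: "\<Union>(set (map ((`) f) c)) = f ` \<Union>(set c)"
  by auto

lemma cc_map: "inj_on f (\<Union>(set c)) \<Longrightarrow> cc c \<Longrightarrow> cc (map ((`) f) c)"
proof (induction c)
  case Nil then show ?case by simp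
next
  case (Cons X c)
  have inj: "inj_on f (\<Union>(set c))" using Cons.prems(1) by (rule inj_on_subset) auto
  have "f ` X \<inter> f ` \<Union>(set c) = f ` (X \<inter> \<Union>(set c))"
    using inj_on_image_Int[OF Cons.prems(1), of X "\<Union>(set c)"] by auto
  then show ?case using Cons inj Union_map_image[of f c] by auto
qed

lemma Comp_map: "inj_on f A \<Longrightarrow> c \<in> Comp A \<Longrightarrow> map ((`) f) c \<in> Comp (f ` A)"
  unfolding Comp_iff using cc_map Union_map_image by metis

lemma res_map: "inj_on h (\<Union>(set v) \<union> X) \<Longrightarrow> map ((`) h) (res v X) = res (map ((`) h) v) (h ` X)"
proof (induction v)
  case Nil then show ?case by simp
next
  case (Cons Y v)
  have inj: "inj_on h (\<Union>(set v) \<union> X)" using Cons.prems by (rule inj_on_subset) auto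
  have I: "h ` (Y \<inter> X) = h ` Y \<inter> h ` X" using inj_on_image_Int[OF Cons.prems, of Y X] by auto
  show ?case using Cons.IH[OF inj] I by (auto simp: res_Cons)
qed

lemma meet_map:
  assumes "inj_on h (\<Union>(set u) \<union> \<Union>(set v))"
  shows "map ((`) h) (meet u v) = meet (map ((`) h) u) (map ((`) h) v)"
proof -
  have "map ((`) h) (res v X) = res (map ((`) h) v) (h ` X)" if "X \<in> set u" for X
    using res_map[of h v X] assms that by (metis (no_types, lifting) Sup_upper inj_on_subset sup_commute sup_mono order_refl)
  then show ?thesis unfolding meet_def map_concat map_map o_def
    by (metis (no_types, lifting) map_eq_conv)
qed

context
  fixes f :: "'a \<Rightarrow> 'a" and A B :: "'a set"
  assumes bij: "bij_betw f A B"
begin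

definition G :: "'a set list \<Rightarrow> 'a set list" where
  "G w = map ((`) (inv_into A f)) w"

lemma fA: "f ` A = B" using bij by (rule bij_betw_imp_surj_on)
lemma injf: "inj_on f A" using bij by (rule bij_betw_imp_inj_on)

lemma G_map: "c \<in> Comp A \<Longrightarrow> G (map ((`) f) c) = c"
proof -
  assume c: "c \<in> Comp A"
  have "inv_into A f ` f ` X = X" if "X \<in> set c" for X
    using inv_into_image_cancel[OF injf] that Comp_U[OF c] by blast
  then show ?thesis unfolding G_def map_map o_def by (rule map_idI)
qed

lemma map_G: "w \<in> Comp B \<Longrightarrow> map ((`) f) (G w) = w"
proof -
  assume w: "w \<in> Comp B"
  have "f ` inv_into A f ` Y = Y" if "Y \<in> set w" for Y
    using image_inv_into_cancel[OF fA] that Comp_U[OF w] by blast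
  then show ?thesis unfolding G_def map_map o_def by (rule map_idI)
qed

lemma G_Comp: "w \<in> Comp B \<Longrightarrow> G w \<in> Comp A"
proof -
  assume w: "w \<in> Comp B"
  have b: "bij_betw (inv_into A f) B A" using bij by (rule bij_betw_inv_into)
  have "map ((`) (inv_into A f)) w \<in> Comp (inv_into A f ` B)"
    using Comp_map[OF bij_betw_imp_inj_on[OF b] w] .
  then show ?thesis unfolding G_def using bij_betw_imp_surj_on[OF b] by simp
qed

lemma G_meet: "u \<in> Comp B \<Longrightarrow> v \<in> Comp B \<Longrightarrow> G (meet u v) = meet (G u) (G v)"
proof -
  assume u: "u \<in> Comp B" and v: "v \<in> Comp B"
  have "inj_on (inv_into A f) B" using inj_on_inv_into[of B f A] fA by simp
  then show ?thesis unfolding G_def using meet_map[of "inv_into A f" u v] Comp_U[OF u] Comp_U[OF v] by simp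
qed

lemma map_Comp_iff: "c \<in> Comp A \<Longrightarrow> w \<in> Comp B \<Longrightarrow> map ((`) f) c = w \<longleftrightarrow> c = G w"
  using G_map map_G by metis

lemma relab_closed:
  fixes x :: "'a set list \<Rightarrow> 'k::comm_ring_1"
  assumes A: "finite A"
  shows "relab A f x w = (if w \<in> Comp B then x (G w) else 0)"
proof -
  have "relab A f x w = (\<Sum>c\<in>Comp A. x c * (if map ((`) f) c = w then 1 else 0))" by (simp add: relab_def)
  also have "\<dots> = (if G w \<in> Comp A then x (G w) * (if map ((`) f) (G w) = w then 1 else 0) else 0)"
  proof (rule sum_unique[OF finite_Comp[OF A]])
    fix c assume c: "c \<in> Comp A" "c \<noteq> G w"
    have "map ((`) f) c \<noteq> w"
    proof
      assume "map ((`) f) c = w"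
      then have "G w = c" using G_map[OF c(1)] by simp
      then show False using c(2) by simp
    qed
    then show "x c * (if map ((`) f) c = w then 1 else 0) = 0" by simp
  qed
  also have "\<dots> = (if w \<in> Comp B then x (G w) else 0)"
  proof (cases "w \<in> Comp B")
    case True then show ?thesis using G_Comp map_G by simp
  next
    case False
    have "G w \<in> Comp A \<Longrightarrow> map ((`) f) (G w) \<noteq> w"
      using Comp_map[OF injf, of "G w"] fA False by auto
    then show ?thesis using False by auto
  qed
  finally show ?thesis .
qed

lemma relab2_closed:
  fixes T :: "'a set list \<times> 'a set list \<Rightarrow> 'k::comm_ring_1"
  assumes A: "finite A"
  shows "relab2 A f T (u, v) = (if u \<in> Comp B \<and> v \<in> Comp B then T (G u, G v) else 0)"
proof -
  have "relab2 A f T (u, v) = (\<Sum>(a, b)\<in>Comp A \<times> Comp A.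
      T (a, b) * (if map ((`) f) a = u then 1 else 0) * (if map ((`) f) b = v then 1 else 0))"
    by (simp add: relab2_def)
  also have "\<dots> = (if (G u, G v) \<in> Comp A \<times> Comp A then
      T (G u, G v) * (if map ((`) f) (G u) = u then 1 else 0) * (if map ((`) f) (G v) = v then 1 else 0) else 0)"
  proof (rule sum_unique2)
    show "finite (Comp A \<times> Comp A)" using finite_Comp[OF A] by simp
    fix a b assume ab: "(a, b) \<in> Comp A \<times> Comp A" "(a, b) \<noteq> (G u, G v)"
    have "map ((`) f) a \<noteq> u \<or> map ((`) f) b \<noteq> v"
    proof (rule ccontr)
      assume "\<not> (map ((`) f) a \<noteq> u \<or> map ((`) f) b \<noteq> v)"
      then have "map ((`) f) a = u" "map ((`) f) b = v" by auto
      then have "G u = a" "G v = b" using G_map ab(1) by auto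
      then show False using ab(2) by simp
    qed
    then show "T (a, b) * (if map ((`) f) a = u then 1 else 0) * (if map ((`) f) b = v then 1 else 0) = 0"
      by auto
  qed
  also have "\<dots> = (if u \<in> Comp B \<and> v \<in> Comp B then T (G u, G v) else 0)"
  proof (cases "u \<in> Comp B \<and> v \<in> Comp B")
    case True then show ?thesis using G_Comp map_G by simp
  next
    case False
    have "G u \<in> Comp A \<Longrightarrow> G v \<in> Comp A \<Longrightarrow> map ((`) f) (G u) \<noteq> u \<or> map ((`) f) (G v) \<noteq> v"
      using Comp_map[OF injf, of "G u"] Comp_map[OF injf, of "G v"] fA False by auto
    then show ?thesis using False by auto
  qed
  finally show ?thesis .
qed

lemma naturality:
  fixes x :: "'a set list \<Rightarrow> 'k::comm_ring_1"
  assumes A: "finite A"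
  shows "delta B (relab A f x) = relab2 A f (delta A x)"
proof (rule ext)
  fix p :: "'a set list \<times> 'a set list"
  obtain u v where p: "p = (u, v)" by (cases p)
  have B: "finite B" using A fA by auto
  have "delta B (relab A f x) (u, v) = relab2 A f (delta A x) (u, v)"
  proof (cases "u \<in> Comp B \<and> v \<in> Comp B")
    case True
    then have u: "u \<in> Comp B" and v: "v \<in> Comp B" by auto
    show ?thesis unfolding delta_closed[OF B] relab2_closed[OF A] relab_closed[OF A] delta_closed[OF A]
      using True meet_Comp[OF u v] G_Comp[OF u] G_Comp[OF v] G_meet[OF u v] by simp
  next
    case False
    then show ?thesis unfolding delta_closed[OF B] relab2_closed[OF A] by auto
  qed
  then show "delta B (relab A f x) p = relab2 A f (delta A x) p" using p by simp
qed

end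



lemma length_concat_ge: "(\<forall>b\<in>set cs. b \<noteq> []) \<Longrightarrow> length cs \<le> length (concat cs)"
proof (induction cs)
  case Nil then show ?case by simp
next
  case (Cons b cs)
  then have "length b \<ge> 1" by (cases b) auto
  then show ?case using Cons by simp
qed

lemma length_mem_concat: "b \<in> set cs \<Longrightarrow> length b \<le> length (concat cs)"
  by (induction cs) auto

lemma finite_splits: "finite (splits c)"
proof -
  let ?L = "{b. set b \<subseteq> set c \<and> length b \<le> length c}"
  have fL: "finite ?L" by (rule finite_lists_length_le) simp
  have "splits c \<subseteq> {cs. set cs \<subseteq> ?L \<and> length cs \<le> length c}"
  proof
    fix cs assume "cs \<in> splits c"
    then have cs: "concat cs = c" "\<forall>b\<in>set cs. b \<noteq> []" by (auto simp: splits_def)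
    have "length cs \<le> length c" using length_concat_ge[OF cs(2)] cs(1) by simp
    moreover have "set cs \<subseteq> ?L"
    proof
      fix b assume b: "b \<in> set cs"
      have "set b \<subseteq> set c" using b cs(1) by auto
      moreover have "length b \<le> length c" using length_mem_concat[OF b] cs(1) by simp
      ultimately show "b \<in> ?L" by simp
    qed
    ultimately show "cs \<in> {cs. set cs \<subseteq> ?L \<and> length cs \<le> length c}" by simp
  qed
  moreover have "finite {cs. set cs \<subseteq> ?L \<and> length cs \<le> length c}"
    using fL by (rule finite_lists_length_le)
  ultimately show ?thesis by (rule finite_subset)
qed

lemma map_union_cc:
  "cc (concat cs) \<Longrightarrow> (\<forall>b\<in>set cs. b \<noteq> []) \<Longrightarrow>
   cc (map (\<lambda>b. \<Union>(set b)) cs) \<and> \<Union>(set (map (\<lambda>b. \<Union>(set b)) cs)) = \<Union>(set (concat cs))"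
proof (induction cs)
  case Nil then show ?case by simp
next
  case (Cons b cs)
  have c: "cc b" "cc (concat cs)" "\<Union>(set b) \<inter> \<Union>(set (concat cs)) = {}"
    using Cons.prems(1) by (auto simp: cc_append)
  have IH: "cc (map (\<lambda>b. \<Union>(set b)) cs) \<and> \<Union>(set (map (\<lambda>b. \<Union>(set b)) cs)) = \<Union>(set (concat cs))"
    using Cons c by auto
  have ne: "\<Union>(set b) \<noteq> {}"
  proof -
    obtain X b' where b: "b = X # b'" using Cons.prems(2) by (cases b) auto
    then have "X \<noteq> {}" using c(1) by simp
    then show ?thesis using b by auto
  qed
  show ?case using IH c ne by auto
qed

lemma qshs_closed:
  "cc (concat cs) \<Longrightarrow> finite (\<Union>(set (concat cs))) \<Longrightarrow>
   (qshs cs v :: 'k::comm_ring_1) =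
   (if v \<in> Comp (\<Union>(set (concat cs))) \<and> (\<forall>b\<in>set cs. res v (\<Union>(set b)) = b) then 1 else 0)"
proof (induction cs arbitrary: v)
  case Nil
  then show ?case by (simp add: unit_def basis_def Comp_empty)
next
  case (Cons b bs)
  let ?B1 = "\<Union>(set b)" and ?B2 = "\<Union>(set (concat bs))"
  have B2: "\<Union>(\<Union>(set ` set bs)) = ?B2" by auto
  have c: "cc b" "cc (concat bs)" "?B1 \<inter> ?B2 = {}"
    using Cons.prems(1) by (auto simp: cc_append)
  have f: "finite ?B1" "finite ?B2" using Cons.prems(2) by auto
  have U: "\<Union>(set (concat (b # bs))) = ?B1 \<union> ?B2" by simp
  have bC: "b \<in> Comp ?B1" using c(1) by (simp add: Comp_iff)
  have "(qshs (b # bs) v :: 'k) = mult ?B1 ?B2 (basis b) (qshs bs) v" by (simp only: qshs.simps B2)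
  also have "\<dots> = (if v \<in> Comp (?B1 \<union> ?B2) then basis b (res v ?B1) * qshs bs (res v ?B2) else 0)"
    by (rule mult_closed[OF f c(3)])
  also have "\<dots> = (if v \<in> Comp (\<Union>(set (concat (b # bs)))) \<and> (\<forall>b'\<in>set (b # bs). res v (\<Union>(set b')) = b') then 1 else 0)"
  proof (cases "v \<in> Comp (?B1 \<union> ?B2)")
    case True
    have r2: "res v ?B2 \<in> Comp ?B2" using res_Comp[OF True] by simp
    have rr: "res (res v ?B2) (\<Union>(set b')) = res v (\<Union>(set b'))" if "b' \<in> set bs" for b'
      using res_res[of "\<Union>(set b')" ?B2 v] that by auto
    have IH: "(qshs bs (res v ?B2) :: 'k) = (if (\<forall>b'\<in>set bs. res v (\<Union>(set b')) = b') then 1 else 0)"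
      using Cons.IH[OF c(2) f(2), of "res v ?B2"] r2 rr by simp
    show ?thesis using True IH U by (auto simp: basis_def)
  next
    case False
    then show ?thesis using U by simp
  qed
  finally show ?case .
qed

lemma dlt_splits:
  assumes A: "finite A" and c: "c \<in> Comp A"
  shows "(dlt c :: _ \<Rightarrow> 'k::comm_ring_1) =
      (\<lambda>(u, v). \<Sum>cs\<in>splits c. (if map (\<lambda>b. \<Union>(set b)) cs = u then 1 else 0) * qshs cs v)"
proof (rule ext)
  fix p :: "'a set list \<times> 'a set list"
  obtain u v where p: "p = (u, v)" by (cases p)
  have cc: "cc c" and U: "\<Union>(set c) = A" using c by (auto simp: Comp_iff)
  have Q: "(qshs cs v :: 'k) = (if v \<in> Comp A \<and> (\<forall>b\<in>set cs. res v (\<Union>(set b)) = b) then 1 else 0)"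
    if "cs \<in> splits c" for cs
  proof -
    have "concat cs = c" using that by (simp add: splits_def)
    then show ?thesis using qshs_closed[of cs v] cc U A by simp
  qed
  let ?cs0 = "map (res v) u"
  have "(\<Sum>cs\<in>splits c. (if map (\<lambda>b. \<Union>(set b)) cs = u then 1 else 0) * (qshs cs v :: 'k)) =
    (if ?cs0 \<in> splits c then (if map (\<lambda>b. \<Union>(set b)) ?cs0 = u then 1 else 0) * qshs ?cs0 v else 0)"
  proof (rule sum_unique[OF finite_splits])
    fix cs assume cs: "cs \<in> splits c" "cs \<noteq> ?cs0"
    have "\<not> (map (\<lambda>b. \<Union>(set b)) cs = u \<and> (\<forall>b\<in>set cs. res v (\<Union>(set b)) = b))"
    proof
      assume a: "map (\<lambda>b. \<Union>(set b)) cs = u \<and> (\<forall>b\<in>set cs. res v (\<Union>(set b)) = b)"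
      then have "?cs0 = map (\<lambda>b. res v (\<Union>(set b))) cs" by auto
      also have "\<dots> = cs" using a by (intro map_idI) auto
      finally show False using cs(2) by simp
    qed
    then show "(if map (\<lambda>b. \<Union>(set b)) cs = u then 1 else 0) * (qshs cs v :: 'k) = 0"
      using Q[OF cs(1)] by auto
  qed
  also have "\<dots> = (if u \<in> Comp A \<and> v \<in> Comp A \<and> c = meet u v then 1 else 0)"
  proof (cases "u \<in> Comp A \<and> v \<in> Comp A \<and> c = meet u v")
    case True
    then have u: "u \<in> Comp A" and v: "v \<in> Comp A" and m: "c = meet u v" by auto
    have rU: "\<Union>(set (res v X)) = X" if "X \<in> set u" for X
      using res_Union[of v X] Comp_U[OF v] Comp_U[OF u] that by auto
    have Xne: "X \<noteq> {}" if "X \<in> set u" for X using u that by (auto simp: Comp_iff cc_iff)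
    have s: "?cs0 \<in> splits c"
      unfolding splits_def mem_Collect_eq
    proof
      show "concat ?cs0 = c" using m by (simp add: meet_def)
      show "\<forall>b\<in>set ?cs0. b \<noteq> []"
      proof
        fix b assume "b \<in> set ?cs0"
        then obtain X where X: "X \<in> set u" "b = res v X" by auto
        then show "b \<noteq> []" using rU[OF X(1)] Xne[OF X(1)] by auto
      qed
    qed
    have mu: "map (\<lambda>b. \<Union>(set b)) ?cs0 = u" using rU by (simp add: map_idI)
    have "\<forall>b\<in>set ?cs0. res v (\<Union>(set b)) = b" using rU by auto
    then have "(qshs ?cs0 v :: 'k) = 1" using Q[OF s] v by simp
    then show ?thesis using s mu True by simp
  next
    case False
    have "?cs0 \<in> splits c \<Longrightarrow> map (\<lambda>b. \<Union>(set b)) ?cs0 = u \<Longrightarrow> (qshs ?cs0 v :: 'k) = 0"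
    proof -
      assume s: "?cs0 \<in> splits c" and mu: "map (\<lambda>b. \<Union>(set b)) ?cs0 = u"
      have cs: "concat ?cs0 = c" "\<forall>b\<in>set ?cs0. b \<noteq> []" using s by (auto simp: splits_def)
      have M: "cc (map (\<lambda>b. \<Union>(set b)) ?cs0) \<and> \<Union>(set (map (\<lambda>b. \<Union>(set b)) ?cs0)) = \<Union>(set (concat ?cs0))"
        using map_union_cc[of ?cs0] cs(2) cc cs(1) by simp
      have "cc u \<and> \<Union>(set u) = A" using M[unfolded mu cs(1) U] .
      then have "u \<in> Comp A" by (simp add: Comp_iff)
      moreover have "c = meet u v" using cs(1) by (simp add: meet_def)
      ultimately have "v \<notin> Comp A" using False by simp
      then show "(qshs ?cs0 v :: 'k) = 0" using Q[OF s] by simp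
    qed
    then show ?thesis using False by auto
  qed
  also have "\<dots> = dlt c (u, v)" by (rule dlt_closed[OF c, symmetric])
  finally show "(dlt c p :: 'k) = (\<lambda>(u, v). \<Sum>cs\<in>splits c. (if map (\<lambda>b. \<Union>(set b)) cs = u then 1 else 0) * qshs cs v) p"
    using p by simp
qed


theorem corollary24:
  shows
  "\<comment> \<open>explicit formula for delta\<close>
   (\<forall>(A::'a set) c. finite A \<longrightarrow> c \<in> Comp A \<longrightarrow> length c \<ge> 1 \<longrightarrow>
      (dlt c :: _ \<Rightarrow> 'k::field) =
      (\<lambda>(u, v). \<Sum>cs\<in>splits c. (if map (\<lambda>b. \<Union>(set b)) cs = u then 1 else 0) * qshs cs v)) \<and>
   \<comment> \<open>naturality\<close>
   (\<forall>(A::'a set) B f (x::'a set list \<Rightarrow> 'k). finite A \<longrightarrow> bij_betw f A B \<longrightarrow> vec A x \<longrightarrow>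
      delta B (relab A f x) = relab2 A f (delta A x)) \<and>
   \<comment> \<open>coassociativity\<close>
   (\<forall>(A::'a set) (x::'a set list \<Rightarrow> 'k). finite A \<longrightarrow> vec A x \<longrightarrow>
      delta_id A (delta A x) = id_delta A (delta A x)) \<and>
   \<comment> \<open>counit epsilon'\<close>
   (\<forall>(A::'a set) (x::'a set list \<Rightarrow> 'k). finite A \<longrightarrow> vec A x \<longrightarrow>
      eps_id A (delta A x) = x \<and> id_eps A (delta A x) = x) \<and>
   \<comment> \<open>multiplicativity of delta and epsilon'\<close>
   (\<forall>(A::'a set) B (x::'a set list \<Rightarrow> 'k) y. finite A \<longrightarrow> finite B \<longrightarrow> A \<inter> B = {} \<longrightarrow>
      vec A x \<longrightarrow> vec B y \<longrightarrow>
      delta (A \<union> B) (mult A B x y) = mult2 A B (delta A x) (delta B y) \<and>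
      epsp (A \<union> B) (mult A B x y) = epsp A x * epsp B y) \<and>
   delta {} (unit :: 'a set list \<Rightarrow> 'k) = (\<lambda>(u, v). unit u * unit v) \<and>
   epsp {} (unit :: 'a set list \<Rightarrow> 'k) = 1 \<and>
   \<comment> \<open>compatibility of Delta and delta\<close>
   (\<forall>(A::'a set) B (x::'a set list \<Rightarrow> 'k). finite A \<longrightarrow> finite B \<longrightarrow> A \<inter> B = {} \<longrightarrow>
      vec (A \<union> B) x \<longrightarrow>
      Delta_id A B (delta (A \<union> B) x) = m1324_dd A B (Delta A B x)) \<and>
   \<comment> \<open>compatibility of the counit of Delta with delta\<close>
   (\<forall>x::'a set list \<Rightarrow> 'k. vec {} x \<longrightarrow>
      epsD_id (delta {} x) = (\<lambda>w. epsD x * unit w))"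
  proof (intro conjI allI impI)
  fix A :: "'a set" and c assume "finite A" "c \<in> Comp A"
  then show "(dlt c :: _ \<Rightarrow> 'k) =
      (\<lambda>(u, v). \<Sum>cs\<in>splits c. (if map (\<lambda>b. \<Union>(set b)) cs = u then 1 else 0) * qshs cs v)"
    by (rule dlt_splits)
next
  fix A B :: "'a set" and f and x :: "'a set list \<Rightarrow> 'k"
  assume "finite A" "bij_betw f A B"
  then show "delta B (relab A f x) = relab2 A f (delta A x)" using naturality by blast
next
  fix A :: "'a set" and x :: "'a set list \<Rightarrow> 'k"
  assume "finite A"
  then show "delta_id A (delta A x) = id_delta A (delta A x)" by (rule coassoc)
next
  fix A :: "'a set" and x :: "'a set list \<Rightarrow> 'k"
  assume "finite A" "vec A x"
  then show "eps_id A (delta A x) = x" by (rule counit_L)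
next
  fix A :: "'a set" and x :: "'a set list \<Rightarrow> 'k"
  assume "finite A" "vec A x"
  then show "id_eps A (delta A x) = x" by (rule counit_R)
next
  fix A B :: "'a set" and x y :: "'a set list \<Rightarrow> 'k"
  assume "finite A" "finite B" "A \<inter> B = {}"
  then show "delta (A \<union> B) (mult A B x y) = mult2 A B (delta A x) (delta B y)" by (rule mult_delta)
next
  fix A B :: "'a set" and x y :: "'a set list \<Rightarrow> 'k"
  assume "finite A" "finite B" "A \<inter> B = {}"
  then show "epsp (A \<union> B) (mult A B x y) = epsp A x * epsp B y" by (rule mult_eps)
next
  show "delta {} (unit :: 'a set list \<Rightarrow> 'k) = (\<lambda>(u, v). unit u * unit v)" by (rule unit_delta)
next
  show "epsp {} (unit :: 'a set list \<Rightarrow> 'k) = 1" by (rule unit_eps)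
next
  fix A B :: "'a set" and x :: "'a set list \<Rightarrow> 'k"
  assume "finite A" "finite B" "A \<inter> B = {}"
  then show "Delta_id A B (delta (A \<union> B) x) = m1324_dd A B (Delta A B x)" by (rule Delta_compat)
next
  fix x :: "'a set list \<Rightarrow> 'k"
  show "epsD_id (delta {} x) = (\<lambda>w. epsD x * unit w)" by (rule epsD_compat)
qed

end
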